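(* The universal abstract regular polytope $\mathcal{Q}=\{\{4,3\}_3,\{3,4\}_3\}$, with hemicubes as facets and hemi-octahedra as vertex figures, has no proper quotients: every polytope $\mathcal{R}$ admitting a covering $\mathcal{Q}\to\mathcal{R}$ is isomorphic to $\mathcal{Q}$.
   Context: The universal polytope $\{\mathcal{K},\mathcal{L}\}$ is the regular rank-4 abstract polytope with facets $\mathcal{K}$ and vertex figures $\mathcal{L}$ covering every regular polytope with these facets and vertex figures. $\{4,3\}_3=\{4,3\}/2$ is the hemicube and $\{3,4\}_3=\{3,4\}/2$ the hemi-octahedron (quotients of the cube and octahedron by their central inversion). A covering is a rank- and order-preserving surjection between polytopes mapping flags onto flags and preserving adjacency of flags; a quotient of $\mathcal{Q}$ is the image of such a covering, and a proper quotient is one not isomorphic to $\mathcal{Q}$. *)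

theory Defs
  imports Main
begin

record 'a face_poset =
  pfaces :: "'a set"
  pleq :: "'a \<Rightarrow> 'a \<Rightarrow> bool"

definition plt :: "'a face_poset \<Rightarrow> 'a \<Rightarrow> 'a \<Rightarrow> bool" where
  "plt P x y \<longleftrightarrow> pleq P x y \<and> x \<noteq> y"

definition is_poset :: "'a face_poset \<Rightarrow> bool" where
  "is_poset P \<longleftrightarrow>
     (\<forall>x\<in>pfaces P. pleq P x x) \<and>
     (\<forall>x\<in>pfaces P. \<forall>y\<in>pfaces P. pleq P x y \<and> pleq P y x \<longrightarrow> x = y) \<and>
     (\<forall>x\<in>pfaces P. \<forall>y\<in>pfaces P. \<forall>z\<in>pfaces P. pleq P x y \<and> pleq P y z \<longrightarrow> pleq P x z)"

definition is_chain :: "'a face_poset \<Rightarrow> 'a set \<Rightarrow> bool" where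
  "is_chain P C \<longleftrightarrow> C \<subseteq> pfaces P \<and> (\<forall>x\<in>C. \<forall>y\<in>C. pleq P x y \<or> pleq P y x)"

definition is_flag :: "'a face_poset \<Rightarrow> 'a set \<Rightarrow> bool" where
  "is_flag P \<Phi> \<longleftrightarrow> is_chain P \<Phi> \<and> (\<forall>C. is_chain P C \<and> \<Phi> \<subseteq> C \<longrightarrow> C = \<Phi>)"

definition flags_adjacent :: "'a set \<Rightarrow> 'a set \<Rightarrow> bool" where
  "flags_adjacent \<Phi> \<Psi> \<longleftrightarrow> finite \<Phi> \<and> finite \<Psi> \<and> card \<Phi> = card \<Psi> \<and> card (\<Phi> - \<Psi>) = 1"

text \<open>Rank of a face: number of faces strictly below it in a flag through it, minus one
  (well defined in an abstract polytope).\<close>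
definition face_rank :: "'a face_poset \<Rightarrow> 'a \<Rightarrow> int" where
  "face_rank P x = int (card {y \<in> (SOME \<Phi>. is_flag P \<Phi> \<and> x \<in> \<Phi>). plt P y x}) - 1"

definition is_least :: "'a face_poset \<Rightarrow> 'a \<Rightarrow> bool" where
  "is_least P x \<longleftrightarrow> x \<in> pfaces P \<and> (\<forall>y\<in>pfaces P. pleq P x y)"

definition is_greatest :: "'a face_poset \<Rightarrow> 'a \<Rightarrow> bool" where
  "is_greatest P x \<longleftrightarrow> x \<in> pfaces P \<and> (\<forall>y\<in>pfaces P. pleq P y x)"

definition strongly_flag_connected :: "'a face_poset \<Rightarrow> bool" where
  "strongly_flag_connected P \<longleftrightarrow>
     (\<forall>\<Phi> \<Psi>. is_flag P \<Phi> \<and> is_flag P \<Psi> \<longrightarrow>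
        (\<exists>fs. fs \<noteq> [] \<and> hd fs = \<Phi> \<and> last fs = \<Psi> \<and>
              (\<forall>\<Lambda>\<in>set fs. is_flag P \<Lambda> \<and> \<Phi> \<inter> \<Psi> \<subseteq> \<Lambda>) \<and>
              (\<forall>i. Suc i < length fs \<longrightarrow> flags_adjacent (fs ! i) (fs ! Suc i))))"

definition diamond_condition :: "'a face_poset \<Rightarrow> bool" where
  "diamond_condition P \<longleftrightarrow>
     (\<forall>x\<in>pfaces P. \<forall>y\<in>pfaces P. plt P x y \<and> face_rank P y = face_rank P x + 2 \<longrightarrow>
        card {z \<in> pfaces P. plt P x z \<and> plt P z y} = 2)"

definition is_polytope :: "'a face_poset \<Rightarrow> nat \<Rightarrow> bool" where
  "is_polytope P n \<longleftrightarrow>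
     is_poset P \<and>
     (\<exists>x. is_least P x) \<and> (\<exists>x. is_greatest P x) \<and>
     (\<forall>\<Phi>. is_flag P \<Phi> \<longrightarrow> finite \<Phi> \<and> card \<Phi> = n + 2) \<and>
     strongly_flag_connected P \<and>
     diamond_condition P"

definition section_of :: "'a face_poset \<Rightarrow> 'a \<Rightarrow> 'a \<Rightarrow> 'a face_poset" where
  "section_of P x y = \<lparr> pfaces = {z \<in> pfaces P. pleq P x z \<and> pleq P z y}, pleq = pleq P \<rparr>"

definition poset_iso :: "'a face_poset \<Rightarrow> 'b face_poset \<Rightarrow> bool" where
  "poset_iso P Q \<longleftrightarrow> (\<exists>f. bij_betw f (pfaces P) (pfaces Q) \<and>
      (\<forall>x\<in>pfaces P. \<forall>y\<in>pfaces P. pleq P x y \<longleftrightarrow> pleq Q (f x) (f y)))"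

definition is_regular :: "'a face_poset \<Rightarrow> bool" where
  "is_regular P \<longleftrightarrow>
     (\<forall>\<Phi> \<Psi>. is_flag P \<Phi> \<and> is_flag P \<Psi> \<longrightarrow>
        (\<exists>f. bij_betw f (pfaces P) (pfaces P) \<and>
             (\<forall>x\<in>pfaces P. \<forall>y\<in>pfaces P. pleq P x y \<longleftrightarrow> pleq P (f x) (f y)) \<and>
             f ` \<Phi> = \<Psi>))"

definition facets_iso :: "'a face_poset \<Rightarrow> nat \<Rightarrow> 'b face_poset \<Rightarrow> bool" where
  "facets_iso P n K \<longleftrightarrow>
     (\<forall>x y. is_least P x \<and> y \<in> pfaces P \<and> face_rank P y = int n - 1 \<longrightarrow>
        poset_iso (section_of P x y) K)"

definition vertex_figures_iso :: "'a face_poset \<Rightarrow> 'b face_poset \<Rightarrow> bool" where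
  "vertex_figures_iso P L \<longleftrightarrow>
     (\<forall>x y. x \<in> pfaces P \<and> face_rank P x = 0 \<and> is_greatest P y \<longrightarrow>
        poset_iso (section_of P x y) L)"

definition is_covering :: "'a face_poset \<Rightarrow> 'b face_poset \<Rightarrow> ('a \<Rightarrow> 'b) \<Rightarrow> bool" where
  "is_covering P R g \<longleftrightarrow>
     g ` pfaces P = pfaces R \<and>
     (\<forall>x\<in>pfaces P. face_rank R (g x) = face_rank P x) \<and>
     (\<forall>x\<in>pfaces P. \<forall>y\<in>pfaces P. pleq P x y \<longrightarrow> pleq R (g x) (g y)) \<and>
     (\<forall>\<Phi>. is_flag P \<Phi> \<longrightarrow> is_flag R (g ` \<Phi>)) \<and>
     (\<forall>\<Psi>. is_flag R \<Psi> \<longrightarrow> (\<exists>\<Phi>. is_flag P \<Phi> \<and> g ` \<Phi> = \<Psi>)) \<and>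
     (\<forall>\<Phi> \<Psi>. is_flag P \<Phi> \<and> is_flag P \<Psi> \<and> flags_adjacent \<Phi> \<Psi> \<longrightarrow>
        flags_adjacent (g ` \<Phi>) (g ` \<Psi>))"

text \<open>Such polytopes are countable (flag-connected, locally finite flag graph), so
  quantifying over polytopes with faces in nat loses no generality.\<close>
definition is_universal_KL :: "'a face_poset \<Rightarrow> 'b face_poset \<Rightarrow> 'c face_poset \<Rightarrow> bool" where
  "is_universal_KL P K L \<longleftrightarrow>
     is_polytope P 4 \<and> is_regular P \<and> facets_iso P 4 K \<and> vertex_figures_iso P L \<and>
     (\<forall>R :: nat face_poset. is_polytope R 4 \<and> is_regular R \<and> facets_iso R 4 K \<and>
          vertex_figures_iso R L \<longrightarrow> (\<exists>g. is_covering P R g))"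

text \<open>Faces of the cube [-1,1]^3: None is the empty face; Some v with v in {-1,0,1}^3
  is the face where coordinates with v_i = 0 are free and others fixed to v_i.\<close>
type_synonym cface = "(int \<times> int \<times> int) option"

definition cube_faces :: "cface set" where
  "cube_faces = insert None
     (Some ` {(a, b, c). a \<in> {-1, 0, 1} \<and> b \<in> {-1, 0, 1} \<and> c \<in> {-1, 0, 1}})"

fun cube_le :: "cface \<Rightarrow> cface \<Rightarrow> bool" where
  "cube_le None _ = True"
| "cube_le (Some _) None = False"
| "cube_le (Some (a, b, c)) (Some (a', b', c')) \<longleftrightarrow>
     (a' = 0 \<or> a' = a) \<and> (b' = 0 \<or> b' = b) \<and> (c' = 0 \<or> c' = c)"

definition cube :: "cface face_poset" where
  "cube = \<lparr> pfaces = cube_faces, pleq = cube_le \<rparr>"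

fun cube_inv :: "cface \<Rightarrow> cface" where
  "cube_inv None = None"
| "cube_inv (Some (a, b, c)) = Some (-a, -b, -c)"

text \<open>Hemicube {4,3}_3 = cube / central inversion: faces are orbits {F, -F}.\<close>
definition hemicube :: "cface set face_poset" where
  "hemicube = \<lparr> pfaces = (\<lambda>F. {F, cube_inv F}) ` cube_faces,
                pleq = (\<lambda>A B. \<exists>a\<in>A. \<exists>b\<in>B. cube_le a b) \<rparr>"

definition hemioctahedron :: "cface set face_poset" where
  "hemioctahedron = \<lparr> pfaces = pfaces hemicube, pleq = (\<lambda>A B. pleq hemicube B A) \<rparr>"

end

theory Submission
  imports Defs
begin

definition is_atom :: "'a face_poset \<Rightarrow> 'a \<Rightarrow> 'a \<Rightarrow> bool" where
  "is_atom T b x \<longleftrightarrow> x \<in> pfaces T \<and> plt T b x \<and> (\<forall>z\<in>pfaces T. plt T b z \<longrightarrow> \<not> plt T z x)"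

definition propA :: "'a face_poset \<Rightarrow> bool" where
  "propA T \<longleftrightarrow> (\<forall>b\<in>pfaces T. (\<forall>z\<in>pfaces T. pleq T b z) \<longrightarrow>
     (\<forall>x y. is_atom T b x \<longrightarrow> is_atom T b y \<longrightarrow> x \<noteq> y \<longrightarrow>
        (\<exists>c\<in>pfaces T. plt T x c \<and> plt T y c \<and> (\<forall>z\<in>pfaces T. plt T z c \<longrightarrow> z = b \<or> z = x \<or> z = y))))"

definition atoms_le :: "'a face_poset \<Rightarrow> nat \<Rightarrow> bool" where
  "atoms_le T k \<longleftrightarrow> (\<forall>b\<in>pfaces T. (\<forall>z\<in>pfaces T. pleq T b z) \<longrightarrow>
      finite {x. is_atom T b x} \<and> card {x. is_atom T b x} \<le> k)"

definition atoms_ge :: "'a face_poset \<Rightarrow> nat \<Rightarrow> bool" where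
  "atoms_ge T k \<longleftrightarrow> (\<forall>b\<in>pfaces T. (\<forall>z\<in>pfaces T. pleq T b z) \<longrightarrow> k \<le> card {x. is_atom T b x})"

definition orb :: "cface \<Rightarrow> cface set" where "orb F = {F, cube_inv F}"

lemma inv_inv[simp]: "cube_inv (cube_inv F) = F"
  by (cases F) auto

lemma le_inv: "cube_le (cube_inv F) (cube_inv G) = cube_le F G"
  by (cases F; cases G) auto

lemma orb_eq: "orb F = orb G \<longleftrightarrow> G = F \<or> G = cube_inv F"
  unfolding orb_def by (auto simp: doubleton_eq_iff)

lemma H_faces: "pfaces hemicube = orb ` cube_faces"
  by (simp add: hemicube_def orb_def)

lemma H_le: "pleq hemicube (orb F) (orb G) \<longleftrightarrow> cube_le F G \<or> cube_le (cube_inv F) G"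
proof -
  have "cube_le F (cube_inv G) = cube_le (cube_inv F) G"
    using le_inv[of "cube_inv F" G] by simp
  then show ?thesis by (auto simp: hemicube_def orb_def le_inv)
qed

lemma O_faces: "pfaces hemioctahedron = orb ` cube_faces"
  by (simp add: hemioctahedron_def H_faces)

lemma O_le: "pleq hemioctahedron (orb F) (orb G) \<longleftrightarrow> cube_le G F \<or> cube_le (cube_inv G) F"
  by (simp add: hemioctahedron_def H_le)

lemma plt_H: "plt hemicube (orb F) (orb G) \<longleftrightarrow> (cube_le F G \<or> cube_le (cube_inv F) G) \<and> \<not> (G = F \<or> G = cube_inv F)"
  by (simp only: plt_def H_le orb_eq)

lemma plt_O: "plt hemioctahedron (orb F) (orb G) \<longleftrightarrow> (cube_le G F \<or> cube_le (cube_inv G) F) \<and> \<not> (G = F \<or> G = cube_inv F)"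
  by (simp only: plt_def O_le orb_eq)


lemma cf_inv[simp]: "cube_inv F \<in> cube_faces \<longleftrightarrow> F \<in> cube_faces"
  by (cases F) (auto simp: cube_faces_def)

lemma ball_orb: "(\<forall>z\<in>orb ` A. P z) = (\<forall>F\<in>A. P (orb F))" by auto
lemma bex_orb: "(\<exists>z\<in>orb ` A. P z) = (\<exists>F\<in>A. P (orb F))" by auto

lemma gen_trip: "{(a,b,c). a \<in> D \<and> b \<in> D \<and> c \<in> D} = D \<times> D \<times> D" by auto

lemma cf_alt: "cube_faces = insert None (Some ` ({-1,0,1::int} \<times> {-1,0,1::int} \<times> {-1,0,1::int}))"
  unfolding cube_faces_def gen_trip ..

lemma finite_cf: "finite cube_faces"
  unfolding cf_alt by simp

lemma finite_H: "finite (pfaces hemicube)" by (simp add: H_faces finite_cf)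
lemma finite_O: "finite (pfaces hemioctahedron)" by (simp add: O_faces finite_cf)

lemma orb_None_eq: "orb None = orb F \<longleftrightarrow> F = None"
  by (cases F) (auto simp: orb_eq)

lemma gen_mem_None: "None \<in> insert None (Some ` S)" by simp
lemma gen_mem_Some: "Some t \<in> insert None (Some ` S) \<longleftrightarrow> t \<in> S" by auto
lemma cf_None[simp]: "None \<in> cube_faces" unfolding cf_alt by (rule gen_mem_None)
lemma cf_Some[simp]: "Some (a,b,c) \<in> cube_faces \<longleftrightarrow> a \<in> {-1,0,1} \<and> b \<in> {-1,0,1} \<and> c \<in> {-1,0,1}"
  unfolding cf_alt gen_mem_Some mem_Times_iff fst_conv snd_conv ..
lemma orb_in_iff[simp]: "orb F \<in> orb ` cube_faces \<longleftrightarrow> F \<in> cube_faces"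
proof
  assume "orb F \<in> orb ` cube_faces"
  then obtain G where "G \<in> cube_faces" "orb F = orb G" by blast
  then show "F \<in> cube_faces" by (auto simp: orb_eq)
qed auto

lemma gen_cases: "F \<in> insert None (Some ` (A \<times> B \<times> C)) \<Longrightarrow> F = None \<or> (\<exists>a b c. F = Some (a,b,c) \<and> a \<in> A \<and> b \<in> B \<and> c \<in> C)"
  by auto

lemma cf_cases:
  assumes "F \<in> cube_faces"
  obtains "F = None" | a b c where "F = Some (a,b,c)" "a \<in> {-1,0,1}" "b \<in> {-1,0,1}" "c \<in> {-1,0,1}"
  using gen_cases[OF assms[unfolded cf_alt]] by blast

lemma ball_cf: "(\<forall>F\<in>cube_faces. P F) \<longleftrightarrow> P None \<and> (\<forall>a\<in>{-1,0,1}. \<forall>b\<in>{-1,0,1}. \<forall>c\<in>{-1,0,1::int}. P (Some (a,b,c)))"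
proof
  assume h: "\<forall>F\<in>cube_faces. P F"
  have "P None" using h cf_None by blast
  moreover have "\<forall>a\<in>{-1,0,1}. \<forall>b\<in>{-1,0,1}. \<forall>c\<in>{-1,0,1::int}. P (Some (a,b,c))"
  proof (intro ballI)
    fix a b c :: int assume "a \<in> {-1,0,1}" "b \<in> {-1,0,1}" "c \<in> {-1,0,1}"
    then have "Some (a,b,c) \<in> cube_faces" by (simp only: cf_Some)
    then show "P (Some (a,b,c))" using h by blast
  qed
  ultimately show "P None \<and> (\<forall>a\<in>{-1,0,1}. \<forall>b\<in>{-1,0,1}. \<forall>c\<in>{-1,0,1::int}. P (Some (a,b,c)))" by blast
next
  assume h: "P None \<and> (\<forall>a\<in>{-1,0,1}. \<forall>b\<in>{-1,0,1}. \<forall>c\<in>{-1,0,1::int}. P (Some (a,b,c)))"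
  show "\<forall>F\<in>cube_faces. P F"
  proof
    fix F assume "F \<in> cube_faces"
    then show "P F"
    proof (cases rule: cf_cases)
      case 1 then show ?thesis using h by simp
    next
      case (2 a b c) then show ?thesis using h by blast
    qed
  qed
qed

definition isvert :: "cface \<Rightarrow> bool" where
  "isvert F \<longleftrightarrow> (\<exists>a\<in>{-1,1}. \<exists>b\<in>{-1,1}. \<exists>c\<in>{-1,1::int}. F = Some (a,b,c))"

definition nz :: "int \<Rightarrow> int" where "nz x = (if x = 0 then 1 else x)"

definition vbelow :: "cface \<Rightarrow> cface" where
  "vbelow F = (case F of None \<Rightarrow> None | Some (a,b,c) \<Rightarrow> Some (nz a, nz b, nz c))"

lemma H_nonvert_brute: "\<forall>F\<in>cube_faces. F \<noteq> None \<longrightarrow> \<not> isvert F \<longrightarrow>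
   vbelow F \<in> cube_faces \<and> plt hemicube (orb None) (orb (vbelow F)) \<and> plt hemicube (orb (vbelow F)) (orb F)"
  by (simp add: ball_cf isvert_def vbelow_def nz_def plt_H)

lemma H_vert_brute: "\<forall>F\<in>cube_faces. isvert F \<longrightarrow>
  orb F \<in> {orb (Some (1,1,1)), orb (Some (1,1,-1)), orb (Some (1,-1,1)), orb (Some (-1,1,1))}"
  by (simp add: ball_cf isvert_def orb_eq)

lemma H_bot: assumes "b \<in> pfaces hemicube" "\<forall>z\<in>pfaces hemicube. pleq hemicube b z"
  shows "b = orb None"
proof -
  obtain F where F: "F \<in> cube_faces" "b = orb F" using assms(1) by (auto simp: H_faces)
  have "orb None \<in> pfaces hemicube" by (simp add: H_faces)
  then have "pleq hemicube (orb F) (orb None)" using assms(2) F by auto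
  then have "cube_le F None \<or> cube_le (cube_inv F) None" by (simp add: H_le)
  then have "F = None" by (cases F) auto
  then show ?thesis using F by simp
qed

lemma H_atom_sub: assumes "is_atom hemicube (orb None) x"
  shows "x \<in> {orb (Some (1,1,1)), orb (Some (1,1,-1)), orb (Some (1,-1,1)), orb (Some (-1,1,1))}"
proof -
  obtain F where F: "F \<in> cube_faces" "x = orb F" using assms by (auto simp: is_atom_def H_faces)
  have lt: "plt hemicube (orb None) (orb F)" using assms F by (simp add: is_atom_def)
  have "F \<noteq> None"
  proof
    assume "F = None" with lt show False by (simp add: plt_def)
  qed
  show ?thesis
  proof (cases "isvert F")
    case True then show ?thesis using H_vert_brute F by blast
  next
    case False
    then have "vbelow F \<in> cube_faces \<and> plt hemicube (orb None) (orb (vbelow F)) \<and> plt hemicube (orb (vbelow F)) (orb F)"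
      using H_nonvert_brute F \<open>F \<noteq> None\<close> by blast
    moreover have "orb (vbelow F) \<in> pfaces hemicube" using calculation by (simp add: H_faces)
    ultimately have False using assms F unfolding is_atom_def by blast
    then show ?thesis ..
  qed
qed

lemma H_vert_atoms:
  "\<forall>v\<in>{Some (1,1,1), Some (1,1,-1), Some (1,-1,1), Some (-1,1,1)}. is_atom hemicube (orb None) (orb v)"
  by (simp add: is_atom_def H_faces ball_orb ball_cf plt_H)

definition GoodA :: "'a face_poset \<Rightarrow> 'a \<Rightarrow> 'a \<Rightarrow> 'a \<Rightarrow> 'a \<Rightarrow> bool" where
  "GoodA T b x y c \<longleftrightarrow> c \<in> pfaces T \<and> plt T x c \<and> plt T y c \<and> (\<forall>z\<in>pfaces T. plt T z c \<longrightarrow> z = b \<or> z = x \<or> z = y)"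

lemma GoodA_sym: "GoodA T b x y c \<Longrightarrow> GoodA T b y x c" unfolding GoodA_def by blast

lemma H_good:
  "GoodA hemicube (orb None) (orb (Some (1,1,1))) (orb (Some (1,1,-1))) (orb (Some (1,1,0)))"
  "GoodA hemicube (orb None) (orb (Some (1,1,1))) (orb (Some (1,-1,1))) (orb (Some (1,0,1)))"
  "GoodA hemicube (orb None) (orb (Some (1,1,1))) (orb (Some (-1,1,1))) (orb (Some (0,1,1)))"
  "GoodA hemicube (orb None) (orb (Some (1,1,-1))) (orb (Some (1,-1,1))) (orb (Some (0,1,-1)))"
  "GoodA hemicube (orb None) (orb (Some (1,1,-1))) (orb (Some (-1,1,1))) (orb (Some (1,0,-1)))"
  "GoodA hemicube (orb None) (orb (Some (1,-1,1))) (orb (Some (-1,1,1))) (orb (Some (1,-1,0)))"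
  by (simp_all add: GoodA_def H_faces ball_orb ball_cf plt_H orb_eq)

lemma H_propA: "propA hemicube"
  unfolding propA_def
proof (intro ballI impI allI)
  fix b x y
  assume b: "b \<in> pfaces hemicube" "\<forall>z\<in>pfaces hemicube. pleq hemicube b z"
    and x: "is_atom hemicube b x" and y: "is_atom hemicube b y" and xy: "x \<noteq> y"
  have b0: "b = orb None" using H_bot b by blast
  have "GoodA hemicube b x y c \<Longrightarrow> \<exists>c\<in>pfaces hemicube. plt hemicube x c \<and> plt hemicube y c \<and>
        (\<forall>z\<in>pfaces hemicube. plt hemicube z c \<longrightarrow> z = b \<or> z = x \<or> z = y)" for c
    unfolding GoodA_def by blast
  moreover have "\<exists>c. GoodA hemicube b x y c"
    using H_atom_sub[OF x[unfolded b0]] H_atom_sub[OF y[unfolded b0]] xy H_good b0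
    by (auto intro: H_good H_good[THEN GoodA_sym])
  ultimately show "\<exists>c\<in>pfaces hemicube. plt hemicube x c \<and> plt hemicube y c \<and>
        (\<forall>z\<in>pfaces hemicube. plt hemicube z c \<longrightarrow> z = b \<or> z = x \<or> z = y)" by blast
qed

lemma H_atoms_ge: "atoms_ge hemicube 4"
  unfolding atoms_ge_def
proof (intro ballI impI)
  fix b assume b: "b \<in> pfaces hemicube" "\<forall>z\<in>pfaces hemicube. pleq hemicube b z"
  have b0: "b = orb None" using H_bot b by blast
  let ?L = "{orb (Some (1,1,1)), orb (Some (1,1,-1)), orb (Some (1,-1,1)), orb (Some (-1,1,1::int))}"
  have sub: "?L \<subseteq> {x. is_atom hemicube b x}" using H_vert_atoms b0 by auto
  have fin: "finite {x. is_atom hemicube b x}"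
    by (rule finite_subset[OF _ finite_H]) (auto simp: is_atom_def)
  have "card ?L = 4" by (simp add: orb_eq)
  then show "4 \<le> card {x. is_atom hemicube b x}" using card_mono[OF fin sub] by simp
qed

definition issq :: "cface \<Rightarrow> bool" where
  "issq F \<longleftrightarrow> F \<in> {Some (1,0,0), Some (-1,0,0), Some (0,1,0), Some (0,-1,0), Some (0,0,1), Some (0,0,-1)}"

definition sqabove :: "cface \<Rightarrow> cface" where
  "sqabove F = (case F of None \<Rightarrow> Some (1,0,0) | Some (a,b,c) \<Rightarrow>
      (if a \<noteq> 0 then Some (a,0,0) else if b \<noteq> 0 then Some (0,b,0) else Some (0,0,c)))"

lemma O_nonsq_brute: "\<forall>F\<in>cube_faces. F \<noteq> Some (0,0,0) \<longrightarrow> \<not> issq F \<longrightarrow>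
   sqabove F \<in> cube_faces \<and> plt hemioctahedron (orb (Some (0,0,0))) (orb (sqabove F)) \<and>
   plt hemioctahedron (orb (sqabove F)) (orb F)"
  by (simp add: ball_cf issq_def sqabove_def plt_O)

lemma O_sq_brute: "\<forall>F\<in>cube_faces. issq F \<longrightarrow>
  orb F \<in> {orb (Some (1,0,0)), orb (Some (0,1,0)), orb (Some (0,0,1))}"
  by (simp add: ball_cf issq_def orb_eq)

lemma O_bot: assumes "b \<in> pfaces hemioctahedron" "\<forall>z\<in>pfaces hemioctahedron. pleq hemioctahedron b z"
  shows "b = orb (Some (0,0,0))"
proof -
  obtain F where F: "F \<in> cube_faces" "b = orb F" using assms(1) by (auto simp: O_faces)
  have "orb (Some (0,0,0)) \<in> pfaces hemioctahedron" by (simp add: O_faces)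
  then have "pleq hemioctahedron (orb F) (orb (Some (0,0,0)))" using assms(2) F by auto
  then have h: "cube_le (Some (0,0,0)) F \<or> cube_le (cube_inv (Some (0,0,0))) F" by (simp add: O_le)
  from F(1) have "F = Some (0,0,0)"
  proof (cases rule: cf_cases)
    case 1 then show ?thesis using h by simp
  next
    case (2 a b c) then show ?thesis using h by simp
  qed
  then show ?thesis using F by simp
qed

lemma O_atom_sub: assumes "is_atom hemioctahedron (orb (Some (0,0,0))) x"
  shows "x \<in> {orb (Some (1,0,0)), orb (Some (0,1,0)), orb (Some (0,0,1))}"
proof -
  obtain F where F: "F \<in> cube_faces" "x = orb F" using assms by (auto simp: is_atom_def O_faces)
  have lt: "plt hemioctahedron (orb (Some (0,0,0))) (orb F)" using assms F by (simp add: is_atom_def)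
  have "F \<noteq> Some (0,0,0)"
  proof
    assume "F = Some (0,0,0)" with lt show False by (simp add: plt_def)
  qed
  show ?thesis
  proof (cases "issq F")
    case True then show ?thesis using O_sq_brute F by blast
  next
    case False
    then have "sqabove F \<in> cube_faces \<and> plt hemioctahedron (orb (Some (0,0,0))) (orb (sqabove F)) \<and>
       plt hemioctahedron (orb (sqabove F)) (orb F)"
      using O_nonsq_brute F \<open>F \<noteq> Some (0,0,0)\<close> by blast
    moreover have "orb (sqabove F) \<in> pfaces hemioctahedron" using calculation by (simp add: O_faces)
    ultimately have False using assms F unfolding is_atom_def by blast
    then show ?thesis ..
  qed
qed

lemma O_good:
  "GoodA hemioctahedron (orb (Some (0,0,0))) (orb (Some (1,0,0))) (orb (Some (0,1,0))) (orb (Some (1,1,0)))"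
  "GoodA hemioctahedron (orb (Some (0,0,0))) (orb (Some (1,0,0))) (orb (Some (0,0,1))) (orb (Some (1,0,1)))"
  "GoodA hemioctahedron (orb (Some (0,0,0))) (orb (Some (0,1,0))) (orb (Some (0,0,1))) (orb (Some (0,1,1)))"
  by (simp_all add: GoodA_def O_faces ball_orb ball_cf plt_O orb_eq)

lemma O_propA: "propA hemioctahedron"
  unfolding propA_def
proof (intro ballI impI allI)
  fix b x y
  assume b: "b \<in> pfaces hemioctahedron" "\<forall>z\<in>pfaces hemioctahedron. pleq hemioctahedron b z"
    and x: "is_atom hemioctahedron b x" and y: "is_atom hemioctahedron b y" and xy: "x \<noteq> y"
  have b0: "b = orb (Some (0,0,0))" using O_bot b by blast
  have "GoodA hemioctahedron b x y c \<Longrightarrow> \<exists>c\<in>pfaces hemioctahedron. plt hemioctahedron x c \<and> plt hemioctahedron y c \<and>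
        (\<forall>z\<in>pfaces hemioctahedron. plt hemioctahedron z c \<longrightarrow> z = b \<or> z = x \<or> z = y)" for c
    unfolding GoodA_def by blast
  moreover have "\<exists>c. GoodA hemioctahedron b x y c"
    using O_atom_sub[OF x[unfolded b0]] O_atom_sub[OF y[unfolded b0]] xy O_good b0
    by (auto intro: O_good O_good[THEN GoodA_sym])
  ultimately show "\<exists>c\<in>pfaces hemioctahedron. plt hemioctahedron x c \<and> plt hemioctahedron y c \<and>
        (\<forall>z\<in>pfaces hemioctahedron. plt hemioctahedron z c \<longrightarrow> z = b \<or> z = x \<or> z = y)" by blast
qed

lemma O_atoms_le: "atoms_le hemioctahedron 3"
  unfolding atoms_le_def
proof (intro ballI impI)
  fix b assume b: "b \<in> pfaces hemioctahedron" "\<forall>z\<in>pfaces hemioctahedron. pleq hemioctahedron b z"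
  have b0: "b = orb (Some (0,0,0))" using O_bot b by blast
  let ?L = "{orb (Some (1,0,0)), orb (Some (0,1,0)), orb (Some (0,0,1::int))}"
  have sub: "{x. is_atom hemioctahedron b x} \<subseteq> ?L" using O_atom_sub b0 by blast
  have "card ?L \<le> 3" by (simp add: card_insert_if)
  then show "finite {x. is_atom hemioctahedron b x} \<and> card {x. is_atom hemioctahedron b x} \<le> 3"
    using card_mono[OF _ sub] finite_subset[OF sub] by fastforce
qed

section \<open>Generic poset / polytope facts\<close>

definition gp :: "'a face_poset \<Rightarrow> nat \<Rightarrow> bool" where
  "gp P n \<longleftrightarrow> is_poset P \<and> (\<forall>\<Phi>. is_flag P \<Phi> \<longrightarrow> finite \<Phi> \<and> card \<Phi> = n + 2)"

lemma pol_gp: "is_polytope P n \<Longrightarrow> gp P n"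
  by (simp add: is_polytope_def gp_def)

lemma gp_refl: "gp P n \<Longrightarrow> x \<in> pfaces P \<Longrightarrow> pleq P x x"
  by (simp add: gp_def is_poset_def)

lemma gp_antisym: "gp P n \<Longrightarrow> x \<in> pfaces P \<Longrightarrow> y \<in> pfaces P \<Longrightarrow> pleq P x y \<Longrightarrow> pleq P y x \<Longrightarrow> x = y"
  unfolding gp_def is_poset_def by blast

lemma gp_trans: "gp P n \<Longrightarrow> x \<in> pfaces P \<Longrightarrow> y \<in> pfaces P \<Longrightarrow> z \<in> pfaces P \<Longrightarrow>
   pleq P x y \<Longrightarrow> pleq P y z \<Longrightarrow> pleq P x z"
  unfolding gp_def is_poset_def by blast

lemma chain_extend:
  assumes "is_chain P C" shows "\<exists>\<Phi>. is_flag P \<Phi> \<and> C \<subseteq> \<Phi>"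
proof -
  let ?A = "{D. is_chain P D \<and> C \<subseteq> D}"
  have "\<exists>M\<in>?A. \<forall>X\<in>?A. M \<subseteq> X \<longrightarrow> X = M"
  proof (rule subset_Zorn_nonempty)
    show "?A \<noteq> {}" using assms by blast
  next
    fix \<C> assume ne: "\<C> \<noteq> {}" and ch: "subset.chain ?A \<C>"
    have sub: "\<C> \<subseteq> ?A" and cmp: "\<forall>X\<in>\<C>. \<forall>Y\<in>\<C>. X \<subseteq> Y \<or> Y \<subseteq> X"
      using ch by (auto simp: subset_chain_def)
    have "is_chain P (\<Union>\<C>)"
      unfolding is_chain_def
    proof (intro conjI ballI)
      show "\<Union>\<C> \<subseteq> pfaces P" using sub by (auto simp: is_chain_def)
    next
      fix x y assume "x \<in> \<Union>\<C>" "y \<in> \<Union>\<C>"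
      then obtain X Y where XY: "X \<in> \<C>" "Y \<in> \<C>" "x \<in> X" "y \<in> Y" by blast
      from cmp XY(1,2) have "X \<subseteq> Y \<or> Y \<subseteq> X" by blast
      then show "pleq P x y \<or> pleq P y x"
      proof
        assume "X \<subseteq> Y" then show ?thesis using sub XY by (auto simp: is_chain_def)
      next
        assume "Y \<subseteq> X" then show ?thesis using sub XY by (auto simp: is_chain_def)
      qed
    qed
    moreover have "C \<subseteq> \<Union>\<C>" using ne sub by blast
    ultimately show "\<Union>\<C> \<in> ?A" by blast
  qed
  then obtain M where M: "M \<in> ?A" "\<forall>X\<in>?A. M \<subseteq> X \<longrightarrow> X = M" by blast
  have "is_flag P M" unfolding is_flag_def
  proof (intro conjI allI impI)
    show "is_chain P M" using M by blast
  next
    fix D assume "is_chain P D \<and> M \<subseteq> D"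
    then show "D = M" using M by blast
  qed
  then show ?thesis using M by blast
qed

lemma flag_sub: "is_flag P \<Phi> \<Longrightarrow> \<Phi> \<subseteq> pfaces P"
  by (simp add: is_flag_def is_chain_def)

lemma flag_cmp: "is_flag P \<Phi> \<Longrightarrow> x \<in> \<Phi> \<Longrightarrow> y \<in> \<Phi> \<Longrightarrow> pleq P x y \<or> pleq P y x"
  by (simp add: is_flag_def is_chain_def)

lemma flag_is_chain: "is_flag P \<Phi> \<Longrightarrow> is_chain P \<Phi>"
  by (simp add: is_flag_def)

lemma gp_flag: "gp P n \<Longrightarrow> is_flag P \<Phi> \<Longrightarrow> finite \<Phi> \<and> card \<Phi> = n + 2"
  by (simp add: gp_def)

lemma gp_chain_fin: assumes "gp P n" "is_chain P C" shows "finite C" "card C \<le> n + 2"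
proof -
  obtain \<Phi> where "is_flag P \<Phi>" "C \<subseteq> \<Phi>" using chain_extend assms(2) by blast
  then show "finite C" "card C \<le> n + 2" using gp_flag[OF assms(1)] 
    by (metis finite_subset card_mono)+
qed

lemma gp_chain_flag: assumes "gp P n" "is_chain P C" "card C = n + 2" shows "is_flag P C"
proof -
  obtain \<Phi> where \<Phi>: "is_flag P \<Phi>" "C \<subseteq> \<Phi>" using chain_extend assms(2) by blast
  then have "finite \<Phi>" "card \<Phi> = n + 2" using gp_flag[OF assms(1)] by auto
  then have "C = \<Phi>" using card_subset_eq \<Phi>(2) assms(3) by metis
  then show ?thesis using \<Phi> by simp
qed

lemma face_in_flag: assumes "gp P n" "x \<in> pfaces P" shows "\<exists>\<Phi>. is_flag P \<Phi> \<and> x \<in> \<Phi>"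
proof -
  have "is_chain P {x}" using assms gp_refl by (auto simp: is_chain_def)
  then show ?thesis using chain_extend by blast
qed

lemma two_in_flag: assumes "gp P n" "x \<in> pfaces P" "y \<in> pfaces P" "pleq P x y"
  shows "\<exists>\<Phi>. is_flag P \<Phi> \<and> x \<in> \<Phi> \<and> y \<in> \<Phi>"
proof -
  have "is_chain P {x, y}" using assms gp_refl by (auto simp: is_chain_def)
  then show ?thesis using chain_extend by blast
qed

definition rk :: "'a face_poset \<Rightarrow> 'a set \<Rightarrow> 'a \<Rightarrow> nat" where
  "rk P \<Phi> x = card {y \<in> \<Phi>. plt P y x}"

lemma rk_le:
  assumes gp: "gp P n" and F: "is_flag P \<Phi>" and G: "is_flag P \<Psi>" and x: "x \<in> \<Phi>" "x \<in> \<Psi>"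
  shows "rk P \<Phi> x \<le> rk P \<Psi> x"
proof -
  let ?B = "{y \<in> \<Phi>. plt P y x}" and ?U = "{y \<in> \<Psi>. \<not> plt P y x}" and ?B2 = "{y \<in> \<Psi>. plt P y x}"
  have xf: "x \<in> pfaces P" using x F flag_sub by blast
  have U: "y \<in> ?U \<Longrightarrow> pleq P x y" for y
    using flag_cmp[OF G x(2), of y] gp_antisym[OF gp] flag_sub[OF G] xf gp_refl[OF gp]
    unfolding plt_def by auto
  have "is_chain P (?B \<union> ?U)"
    unfolding is_chain_def
  proof (intro conjI ballI)
    show "?B \<union> ?U \<subseteq> pfaces P" using flag_sub[OF F] flag_sub[OF G] by blast
  next
    fix a b assume a: "a \<in> ?B \<union> ?U" and b: "b \<in> ?B \<union> ?U"
    have aF: "a \<in> pfaces P" "b \<in> pfaces P" using a b flag_sub[OF F] flag_sub[OF G] by blast+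
    show "pleq P a b \<or> pleq P b a"
    proof (cases "a \<in> ?B")
      case True
      show ?thesis
      proof (cases "b \<in> ?B")
        case True then show ?thesis using \<open>a \<in> ?B\<close> flag_cmp[OF F] by blast
      next
        case False
        then have "b \<in> ?U" using b by blast
        then have "pleq P x b" using U by blast
        moreover have "pleq P a x" using \<open>a \<in> ?B\<close> by (simp add: plt_def)
        ultimately show ?thesis using gp_trans[OF gp aF(1) xf aF(2)] by blast
      qed
    next
      case False
      then have aU: "a \<in> ?U" using a by blast
      show ?thesis
      proof (cases "b \<in> ?B")
        case True
        then have "pleq P b x" by (simp add: plt_def)
        moreover have "pleq P x a" using U aU by blast
        ultimately show ?thesis using gp_trans[OF gp aF(2) xf aF(1)] by blast
      next
        case False
        then have "b \<in> ?U" using b by blast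
        then show ?thesis using aU flag_cmp[OF G] by blast
      qed
    qed
  qed
  then have fin: "finite (?B \<union> ?U)" and c: "card (?B \<union> ?U) \<le> n + 2" using gp_chain_fin[OF gp] by auto
  have disj: "?B \<inter> ?U = {}" by blast
  have "card (?B \<union> ?U) = card ?B + card ?U"
    using fin disj by (simp add: card_Un_disjoint)
  moreover have "card \<Psi> = card ?B2 + card ?U"
  proof -
    have "\<Psi> = ?B2 \<union> ?U" by blast
    moreover have "finite \<Psi>" using gp_flag[OF gp G] by blast
    ultimately show ?thesis by (metis (no_types, lifting) card_Un_disjoint disjoint_iff finite_Un mem_Collect_eq)
  qed
  moreover have "card \<Psi> = n + 2" using gp_flag[OF gp G] by blast
  ultimately show ?thesis unfolding rk_def using c by linarith
qed

lemma rk_indep: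
  assumes "gp P n" "is_flag P \<Phi>" "is_flag P \<Psi>" "x \<in> \<Phi>" "x \<in> \<Psi>"
  shows "rk P \<Phi> x = rk P \<Psi> x"
  using rk_le[OF assms] rk_le[OF assms(1,3,2,5,4)] by simp

lemma face_rank_eq:
  assumes gp: "gp P n" and F: "is_flag P \<Phi>" and x: "x \<in> \<Phi>"
  shows "face_rank P x = int (rk P \<Phi> x) - 1"
proof -
  let ?S = "SOME \<Phi>. is_flag P \<Phi> \<and> x \<in> \<Phi>"
  have "is_flag P ?S \<and> x \<in> ?S" using someI[of "\<lambda>\<Phi>. is_flag P \<Phi> \<and> x \<in> \<Phi>"] F x by blast
  then have "rk P ?S x = rk P \<Phi> x" using rk_indep[OF gp] F x by blast
  then show ?thesis unfolding face_rank_def rk_def by simp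
qed

lemma plt_trans1: assumes gp: "gp P n" "a \<in> pfaces P" "b \<in> pfaces P" "c \<in> pfaces P"
  "plt P a b" "plt P b c" shows "plt P a c"
  using assms gp_trans[OF gp(1)] gp_antisym[OF gp(1)] unfolding plt_def by metis

lemma rk_strict:
  assumes gp: "gp P n" and F: "is_flag P \<Phi>" and x: "x \<in> \<Phi>" "y \<in> \<Phi>" and lt: "plt P x y"
  shows "rk P \<Phi> x < rk P \<Phi> y"
proof -
  have fin: "finite \<Phi>" using gp_flag[OF gp F] by blast
  have sub: "{z \<in> \<Phi>. plt P z x} \<subseteq> {z \<in> \<Phi>. plt P z y}"
    using plt_trans1[OF gp] flag_sub[OF F] x lt by blast
  have "x \<in> {z \<in> \<Phi>. plt P z y}" "x \<notin> {z \<in> \<Phi>. plt P z x}" using x lt by (auto simp: plt_def)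
  then have "{z \<in> \<Phi>. plt P z x} \<subset> {z \<in> \<Phi>. plt P z y}" using sub by blast
  then show ?thesis unfolding rk_def using fin by (simp add: psubset_card_mono)
qed

lemma rk_inj:
  assumes gp: "gp P n" and F: "is_flag P \<Phi>" and x: "x \<in> \<Phi>" "y \<in> \<Phi>" and eq: "rk P \<Phi> x = rk P \<Phi> y"
  shows "x = y"
proof (rule ccontr)
  assume ne: "x \<noteq> y"
  from flag_cmp[OF F x] have "pleq P x y \<or> pleq P y x" .
  then have "plt P x y \<or> plt P y x" using ne by (auto simp: plt_def)
  then show False using rk_strict[OF gp F] x eq by (metis less_irrefl)
qed

lemma rk_bound:
  assumes gp: "gp P n" and F: "is_flag P \<Phi>" and x: "x \<in> \<Phi>"
  shows "rk P \<Phi> x < n + 2"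
proof -
  have fin: "finite \<Phi>" and c: "card \<Phi> = n + 2" using gp_flag[OF gp F] by auto
  have "{z \<in> \<Phi>. plt P z x} \<subseteq> \<Phi> - {x}" by (auto simp: plt_def)
  then have "rk P \<Phi> x \<le> card (\<Phi> - {x})" unfolding rk_def using fin by (simp add: card_mono)
  then show ?thesis using c x fin by (simp add: card_Diff_singleton)
qed

lemma rk_image:
  assumes gp: "gp P n" and F: "is_flag P \<Phi>"
  shows "rk P \<Phi> ` \<Phi> = {0..<n+2}"
proof -
  have fin: "finite \<Phi>" and c: "card \<Phi> = n + 2" using gp_flag[OF gp F] by auto
  have inj: "inj_on (rk P \<Phi>) \<Phi>" using rk_inj[OF gp F] by (auto simp: inj_on_def)
  have sub: "rk P \<Phi> ` \<Phi> \<subseteq> {0..<n+2}" using rk_bound[OF gp F] by auto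
  have "card (rk P \<Phi> ` \<Phi>) = n + 2" using card_image[OF inj] c by simp
  then show ?thesis using card_subset_eq[OF _ sub] by simp
qed

lemma flag_has_rank:
  assumes gp: "gp P n" and F: "is_flag P \<Phi>" and k: "-1 \<le> k" "k \<le> int n"
  shows "\<exists>x\<in>\<Phi>. face_rank P x = k"
proof -
  have "nat (k + 1) \<in> {0..<n+2}" using k by auto
  then obtain x where "x \<in> \<Phi>" "rk P \<Phi> x = nat (k + 1)" using rk_image[OF gp F] by (metis imageE)
  then show ?thesis using face_rank_eq[OF gp F] k by force
qed

lemma flag_rank_inj:
  assumes gp: "gp P n" and F: "is_flag P \<Phi>" and x: "x \<in> \<Phi>" "y \<in> \<Phi>"
    and eq: "face_rank P x = face_rank P y"
  shows "x = y"
  using rk_inj[OF gp F x] eq face_rank_eq[OF gp F] x by simp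

lemma rank_range:
  assumes gp: "gp P n" and x: "x \<in> pfaces P"
  shows "-1 \<le> face_rank P x \<and> face_rank P x \<le> int n"
proof -
  obtain \<Phi> where "is_flag P \<Phi>" "x \<in> \<Phi>" using face_in_flag[OF gp x] by blast
  then show ?thesis using face_rank_eq[OF gp] rk_bound[OF gp] by fastforce
qed

lemma plt_rank:
  assumes gp: "gp P n" and x: "x \<in> pfaces P" and y: "y \<in> pfaces P" and lt: "plt P x y"
  shows "face_rank P x < face_rank P y"
proof -
  obtain \<Phi> where F: "is_flag P \<Phi>" "x \<in> \<Phi>" "y \<in> \<Phi>"
    using two_in_flag[OF gp x y] lt by (auto simp: plt_def)
  then show ?thesis using face_rank_eq[OF gp] rk_strict[OF gp] lt by fastforce
qed

lemma pleq_rank: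
  assumes gp: "gp P n" and x: "x \<in> pfaces P" and y: "y \<in> pfaces P" and le: "pleq P x y"
  shows "face_rank P x \<le> face_rank P y"
  using plt_rank[OF gp x y] le by (cases "x = y") (auto simp: plt_def)

lemma flag_lt_by_rank:
  assumes gp: "gp P n" and F: "is_flag P \<Phi>" and x: "x \<in> \<Phi>" "y \<in> \<Phi>"
    and r: "face_rank P x < face_rank P y"
  shows "plt P x y"
proof -
  have xy: "x \<in> pfaces P" "y \<in> pfaces P" using F x flag_sub by blast+
  have "x \<noteq> y" using r by auto
  moreover have "pleq P x y"
  proof (rule ccontr)
    assume "\<not> pleq P x y"
    then have "pleq P y x" using flag_cmp[OF F x] by blast
    then show False using pleq_rank[OF gp xy(2) xy(1)] r by simp
  qed
  ultimately show ?thesis by (simp add: plt_def)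
qed

lemma same_rank_incomparable:
  assumes gp: "gp P n" and x: "x \<in> pfaces P" and y: "y \<in> pfaces P" and ne: "x \<noteq> y"
    and eq: "face_rank P x = face_rank P y"
  shows "\<not> pleq P x y"
  using plt_rank[OF gp x y] ne eq by (auto simp: plt_def)

section \<open>Least and greatest faces\<close>

lemma least_in_flag:
  assumes gp: "gp P n" and b: "is_least P b" and F: "is_flag P \<Phi>"
  shows "b \<in> \<Phi>"
proof -
  have "is_chain P (insert b \<Phi>)"
    using F b gp_refl[OF gp] unfolding is_flag_def is_chain_def is_least_def by auto
  then have "insert b \<Phi> = \<Phi>" using F unfolding is_flag_def by blast
  then show ?thesis by blast
qed

lemma greatest_in_flag:
  assumes gp: "gp P n" and t: "is_greatest P t" and F: "is_flag P \<Phi>"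
  shows "t \<in> \<Phi>"
proof -
  have "is_chain P (insert t \<Phi>)"
    using F t gp_refl[OF gp] unfolding is_flag_def is_chain_def is_greatest_def by auto
  then have "insert t \<Phi> = \<Phi>" using F unfolding is_flag_def by blast
  then show ?thesis by blast
qed

lemma rank_least:
  assumes gp: "gp P n" and b: "is_least P b"
  shows "face_rank P b = -1"
proof -
  have bf: "b \<in> pfaces P" using b by (simp add: is_least_def)
  obtain \<Phi> where F: "is_flag P \<Phi>" "b \<in> \<Phi>" using face_in_flag[OF gp bf] by blast
  have e: "{y \<in> \<Phi>. plt P y b} = {}"
  proof (rule ccontr)
    assume "{y \<in> \<Phi>. plt P y b} \<noteq> {}"
    then obtain y where y: "y \<in> \<Phi>" "plt P y b" by blast
    have yf: "y \<in> pfaces P" using y F flag_sub by blast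
    have "pleq P b y" using b yf by (simp add: is_least_def)
    then show False using y gp_antisym[OF gp yf bf] by (auto simp: plt_def)
  qed
  have "rk P \<Phi> b = 0" unfolding rk_def by (subst e) simp
  then show ?thesis using face_rank_eq[OF gp F] by simp
qed

lemma rank_m1_least:
  assumes gp: "gp P n" and b: "is_least P b" and x: "x \<in> pfaces P" and r: "face_rank P x = -1"
  shows "x = b"
proof (rule ccontr)
  assume ne: "x \<noteq> b"
  obtain \<Phi> where F: "is_flag P \<Phi>" "x \<in> \<Phi>" using face_in_flag[OF gp x] by blast
  have "b \<in> \<Phi>" using least_in_flag[OF gp b F(1)] .
  moreover have "plt P b x" using b x ne by (auto simp: is_least_def plt_def)
  ultimately have "b \<in> {y \<in> \<Phi>. plt P y x}" by blast
  moreover have "finite {y \<in> \<Phi>. plt P y x}" using gp_flag[OF gp F(1)] by simp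
  ultimately have "rk P \<Phi> x > 0" unfolding rk_def by (metis card_gt_0_iff empty_iff)
  then show False using face_rank_eq[OF gp F] r by simp
qed

lemma rank_top:
  assumes gp: "gp P n" and t: "is_greatest P t" and x: "x \<in> pfaces P" and r: "face_rank P x = int n"
  shows "x = t"
proof (rule ccontr)
  assume ne: "x \<noteq> t"
  obtain \<Phi> where F: "is_flag P \<Phi>" "x \<in> \<Phi>" using face_in_flag[OF gp x] by blast
  have tF: "t \<in> \<Phi>" using greatest_in_flag[OF gp t F(1)] .
  have fin: "finite \<Phi>" "card \<Phi> = n + 2" using gp_flag[OF gp F(1)] by auto
  have tf: "t \<in> pfaces P" using t by (simp add: is_greatest_def)
  have "pleq P x t" using t x by (simp add: is_greatest_def)
  then have "\<not> plt P t x" using gp_antisym[OF gp x tf] ne by (auto simp: plt_def)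
  then have "{y \<in> \<Phi>. plt P y x} \<subseteq> \<Phi> - {x, t}" using tF by (auto simp: plt_def)
  then have "rk P \<Phi> x \<le> card (\<Phi> - {x, t})" unfolding rk_def using fin by (simp add: card_mono)
  also have "\<dots> = n" using fin F(2) tF ne by (simp add: card_Diff_subset)
  finally show False using face_rank_eq[OF gp F] r by simp
qed

lemma rank_greatest:
  assumes gp: "gp P n" and t: "is_greatest P t"
  shows "face_rank P t = int n"
proof -
  have tf: "t \<in> pfaces P" using t by (simp add: is_greatest_def)
  obtain \<Phi> where F: "is_flag P \<Phi>" "t \<in> \<Phi>" using face_in_flag[OF gp tf] by blast
  have fin: "finite \<Phi>" "card \<Phi> = n + 2" using gp_flag[OF gp F(1)] by auto
  have "{y \<in> \<Phi>. plt P y t} = \<Phi> - {t}"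
    using t F flag_sub[OF F(1)] by (auto simp: plt_def is_greatest_def)
  then have "rk P \<Phi> t = n + 1" unfolding rk_def using fin F(2) by simp
  then show ?thesis using face_rank_eq[OF gp F] by simp
qed

lemma three_in_flag: assumes gp: "gp P n" and abc: "a \<in> pfaces P" "b \<in> pfaces P" "c \<in> pfaces P"
  and le: "pleq P a b" "pleq P b c"
  shows "\<exists>\<Phi>. is_flag P \<Phi> \<and> a \<in> \<Phi> \<and> b \<in> \<Phi> \<and> c \<in> \<Phi>"
proof -
  have "pleq P a c" using gp_trans[OF gp abc le] .
  then have "is_chain P {a, b, c}" using abc le gp_refl[OF gp] by (auto simp: is_chain_def)
  then show ?thesis using chain_extend by blast
qed

section \<open>Adjacent flags and coverings\<close>

lemma cov_img: "is_covering P R g \<Longrightarrow> g ` pfaces P = pfaces R"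
  unfolding is_covering_def by (elim conjE)
lemma cov_in: "is_covering P R g \<Longrightarrow> x \<in> pfaces P \<Longrightarrow> g x \<in> pfaces R"
  using cov_img by blast
lemma cov_rank: "is_covering P R g \<Longrightarrow> x \<in> pfaces P \<Longrightarrow> face_rank R (g x) = face_rank P x"
  unfolding is_covering_def by (elim conjE) blast
lemma cov_le: "is_covering P R g \<Longrightarrow> x \<in> pfaces P \<Longrightarrow> y \<in> pfaces P \<Longrightarrow> pleq P x y \<Longrightarrow> pleq R (g x) (g y)"
  unfolding is_covering_def by (elim conjE) blast
lemma cov_lift0: "is_covering P R g \<Longrightarrow> (\<forall>\<Psi>. is_flag R \<Psi> \<longrightarrow> (\<exists>\<Phi>. is_flag P \<Phi> \<and> g ` \<Phi> = \<Psi>))"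
  unfolding is_covering_def by (elim conjE) assumption
lemma cov_lift: "is_covering P R g \<Longrightarrow> is_flag R \<Psi> \<Longrightarrow> \<exists>\<Phi>. is_flag P \<Phi> \<and> g ` \<Phi> = \<Psi>"
  using cov_lift0 by blast
lemma cov_adj0: "is_covering P R g \<Longrightarrow> (\<forall>\<Phi> \<Psi>. is_flag P \<Phi> \<and> is_flag P \<Psi> \<and> flags_adjacent \<Phi> \<Psi> \<longrightarrow>
        flags_adjacent (g ` \<Phi>) (g ` \<Psi>))"
  unfolding is_covering_def by (elim conjE) assumption
lemma cov_adj: "is_covering P R g \<Longrightarrow> is_flag P \<Phi> \<Longrightarrow> is_flag P \<Psi> \<Longrightarrow> flags_adjacent \<Phi> \<Psi> \<Longrightarrow> flags_adjacent (g ` \<Phi>) (g ` \<Psi>)"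
  using cov_adj0 by blast
lemma cov_flag0: "is_covering P R g \<Longrightarrow> (\<forall>\<Phi>. is_flag P \<Phi> \<longrightarrow> is_flag R (g ` \<Phi>))"
  unfolding is_covering_def by (elim conjE) assumption

lemma swap_basic:
  assumes gp: "gp P n" and cov: "is_covering P R g" and F: "is_flag P \<Phi>" and a: "a \<in> \<Phi>"
    and b: "b \<in> pfaces P" "b \<notin> \<Phi>" and ch: "is_chain P (insert b (\<Phi> - {a}))"
  shows "g a \<noteq> g b"
proof
  assume eq: "g a = g b"
  let ?\<Psi> = "insert b (\<Phi> - {a})"
  have fin: "finite \<Phi>" "card \<Phi> = n + 2" using gp_flag[OF gp F] by auto
  have cPsi: "card ?\<Psi> = n + 2"
  proof -
    have "b \<notin> \<Phi> - {a}" using b by blast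
    then have "card ?\<Psi> = Suc (card (\<Phi> - {a}))" using fin by simp
    also have "\<dots> = card \<Phi>" using fin a by (simp add: card_Diff_singleton)
    finally show ?thesis using fin by simp
  qed
  have Pf: "is_flag P ?\<Psi>" using gp_chain_flag[OF gp ch cPsi] .
  have ab: "a \<noteq> b" using a b by blast
  have "\<Phi> - ?\<Psi> = {a}" using a ab by blast
  then have adj: "flags_adjacent \<Phi> ?\<Psi>" unfolding flags_adjacent_def using fin cPsi by simp
  have "flags_adjacent (g ` \<Phi>) (g ` ?\<Psi>)"
    using cov_adj[OF cov F Pf adj] .
  moreover have "g ` ?\<Psi> = g ` \<Phi>"
  proof -
    have "g ` ?\<Psi> = insert (g a) (g ` (\<Phi> - {a}))" using eq by simp
    also have "\<dots> = g ` (insert a (\<Phi> - {a}))" by (simp only: image_insert)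
    also have "insert a (\<Phi> - {a}) = \<Phi>" using a by blast
    finally show ?thesis .
  qed
  ultimately show False unfolding flags_adjacent_def by simp
qed

lemma swap2:
  assumes gp: "gp P n" and cov: "is_covering P R g" and F: "is_flag P \<Phi>"
    and lo: "lo \<in> \<Phi>" and a: "a \<in> \<Phi>" and hi: "hi \<in> \<Phi>"
    and rl: "face_rank P lo = k - 1" and ra: "face_rank P a = k" and rh: "face_rank P hi = k + 1"
    and b: "b \<in> pfaces P" and lb: "plt P lo b" and bh: "plt P b hi" and ba: "b \<noteq> a"
  shows "g a \<noteq> g b"
proof -
  have Fs: "\<Phi> \<subseteq> pfaces P" using flag_sub[OF F] .
  have lof: "lo \<in> pfaces P" and hif: "hi \<in> pfaces P" using lo hi Fs by auto
  have rb: "face_rank P b = k"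
    using plt_rank[OF gp lof b lb] plt_rank[OF gp b hif bh] rl rh by linarith
  have bnot: "b \<notin> \<Phi>"
  proof
    assume "b \<in> \<Phi>"
    then have "b = a" using flag_rank_inj[OF gp F _ a] rb ra by simp
    then show False using ba by simp
  qed
  have cmpb: "pleq P z b \<or> pleq P b z" if z: "z \<in> \<Phi>" "z \<noteq> a" for z
  proof -
    have zf: "z \<in> pfaces P" using z Fs by blast
    have "face_rank P z \<noteq> k" using flag_rank_inj[OF gp F z(1) a] z(2) ra by auto
    then consider "face_rank P z < k" | "face_rank P z > k" by linarith
    then show ?thesis
    proof cases
      case 1
      have "pleq P z lo"
      proof (rule ccontr)
        assume "\<not> pleq P z lo"
        then have "pleq P lo z" "z \<noteq> lo" using flag_cmp[OF F z(1) lo] gp_refl[OF gp zf] by auto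
        then have "face_rank P lo < face_rank P z" using plt_rank[OF gp lof zf] by (simp add: plt_def)
        then show False using 1 rl by linarith
      qed
      then have "pleq P z b" using gp_trans[OF gp zf lof b] lb by (simp add: plt_def)
      then show ?thesis by blast
    next
      case 2
      have "pleq P hi z"
      proof (rule ccontr)
        assume "\<not> pleq P hi z"
        then have "pleq P z hi" "z \<noteq> hi" using flag_cmp[OF F z(1) hi] gp_refl[OF gp zf] by auto
        then have "face_rank P z < face_rank P hi" using plt_rank[OF gp zf hif] by (simp add: plt_def)
        then show False using 2 rh by linarith
      qed
      then have "pleq P b z" using gp_trans[OF gp b hif zf] bh by (simp add: plt_def)
      then show ?thesis by blast
    qed
  qed
  have ch: "is_chain P (insert b (\<Phi> - {a}))"
    unfolding is_chain_def
  proof (intro conjI ballI)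
    show "insert b (\<Phi> - {a}) \<subseteq> pfaces P" using Fs b by blast
  next
    fix x y assume x: "x \<in> insert b (\<Phi> - {a})" and y: "y \<in> insert b (\<Phi> - {a})"
    show "pleq P x y \<or> pleq P y x"
    proof (cases "x = b")
      case True
      then show ?thesis
      proof (cases "y = b")
        case True then show ?thesis using \<open>x = b\<close> gp_refl[OF gp b] by simp
      next
        case False then show ?thesis using \<open>x = b\<close> y cmpb by blast
      qed
    next
      case False
      then have xF: "x \<in> \<Phi>" "x \<noteq> a" using x by auto
      show ?thesis
      proof (cases "y = b")
        case True then show ?thesis using xF cmpb by blast
      next
        case False
        then have "y \<in> \<Phi>" using y by auto
        then show ?thesis using flag_cmp[OF F xF(1)] by blast
      qed
    qed
  qed
  show ?thesis using swap_basic[OF gp cov F a b bnot ch] .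
qed

section \<open>Transport along isomorphisms\<close>

lemma sec_faces: "pfaces (section_of P x y) = {z \<in> pfaces P. pleq P x z \<and> pleq P z y}"
  by (simp add: section_of_def)
lemma sec_le: "pleq (section_of P x y) = pleq P"
  by (simp add: section_of_def)
lemma sec_plt: "plt (section_of P x y) = plt P"
  by (rule ext)+ (simp add: plt_def sec_le)

lemma iso_transport:
  assumes bij: "bij_betw h (pfaces S) (pfaces T)"
    and ord: "\<forall>x\<in>pfaces S. \<forall>y\<in>pfaces S. pleq S x y \<longleftrightarrow> pleq T (h x) (h y)"
  shows "propA T \<Longrightarrow> propA S"
    and "atoms_le T k \<Longrightarrow> atoms_le S k"
    and "atoms_ge T k \<Longrightarrow> atoms_ge S k"
proof -
  have inj: "inj_on h (pfaces S)" and img: "h ` pfaces S = pfaces T"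
    using bij by (auto simp: bij_betw_def)
  have hT: "x \<in> pfaces S \<Longrightarrow> h x \<in> pfaces T" for x using img by blast
  have pre: "y \<in> pfaces T \<Longrightarrow> \<exists>x\<in>pfaces S. y = h x" for y using img by blast
  have hplt: "plt S x y \<longleftrightarrow> plt T (h x) (h y)" if "x \<in> pfaces S" "y \<in> pfaces S" for x y
    using ord that inj_onD[OF inj] unfolding plt_def by metis
  have hleast: "\<forall>z\<in>pfaces T. pleq T (h b) z" if "b \<in> pfaces S" "\<forall>z\<in>pfaces S. pleq S b z" for b
    using that ord pre by metis
  have hatom: "is_atom S b x \<longleftrightarrow> is_atom T (h b) (h x)" if "b \<in> pfaces S" "x \<in> pfaces S" for b x
  proof
    assume A: "is_atom S b x"
    show "is_atom T (h b) (h x)" unfolding is_atom_def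
    proof (intro conjI ballI impI)
      show "h x \<in> pfaces T" using hT that by blast
      show "plt T (h b) (h x)" using A hplt that by (simp add: is_atom_def)
    next
      fix z assume z: "z \<in> pfaces T" "plt T (h b) z"
      then obtain z' where z': "z' \<in> pfaces S" "z = h z'" using pre by blast
      then have "plt S b z'" using z hplt that by simp
      then have "\<not> plt S z' x" using A z' by (simp add: is_atom_def)
      then show "\<not> plt T z (h x)" using hplt z' that by simp
    qed
  next
    assume A: "is_atom T (h b) (h x)"
    show "is_atom S b x" unfolding is_atom_def
    proof (intro conjI ballI impI)
      show "x \<in> pfaces S" using that by blast
      show "plt S b x" using A hplt that by (simp add: is_atom_def)
    next
      fix z assume z: "z \<in> pfaces S" "plt S b z"
      then have "plt T (h b) (h z)" using hplt that by simp
      then have "\<not> plt T (h z) (h x)" using A hT z by (simp add: is_atom_def)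
      then show "\<not> plt S z x" using hplt z that by simp
    qed
  qed
  have atset: "bij_betw h {x. is_atom S b x} {y. is_atom T (h b) y}" if "b \<in> pfaces S" for b
  proof (rule bij_betw_subset[OF bij])
    show "{x. is_atom S b x} \<subseteq> pfaces S" by (auto simp: is_atom_def)
    show "h ` {x. is_atom S b x} = {y. is_atom T (h b) y}"
    proof
      show "h ` {x. is_atom S b x} \<subseteq> {y. is_atom T (h b) y}"
        using hatom that by (auto simp: is_atom_def)
    next
      show "{y. is_atom T (h b) y} \<subseteq> h ` {x. is_atom S b x}"
      proof
        fix y assume "y \<in> {y. is_atom T (h b) y}"
        then have y: "is_atom T (h b) y" by simp
        then have "y \<in> pfaces T" by (simp add: is_atom_def)
        then obtain x where x: "x \<in> pfaces S" "y = h x" using pre by blast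
        then have "is_atom S b x" using hatom that y by simp
        then show "y \<in> h ` {x. is_atom S b x}" using x by blast
      qed
    qed
  qed
  show "propA T \<Longrightarrow> propA S"
    unfolding propA_def
  proof (intro ballI impI allI)
    fix b x y
    assume pT: "\<forall>b\<in>pfaces T. (\<forall>z\<in>pfaces T. pleq T b z) \<longrightarrow>
     (\<forall>x y. is_atom T b x \<longrightarrow> is_atom T b y \<longrightarrow> x \<noteq> y \<longrightarrow>
        (\<exists>c\<in>pfaces T. plt T x c \<and> plt T y c \<and> (\<forall>z\<in>pfaces T. plt T z c \<longrightarrow> z = b \<or> z = x \<or> z = y)))"
      and b: "b \<in> pfaces S" and bl: "\<forall>z\<in>pfaces S. pleq S b z"
      and x: "is_atom S b x" and y: "is_atom S b y" and xy: "x \<noteq> y"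
    have xS: "x \<in> pfaces S" and yS: "y \<in> pfaces S" using x y by (auto simp: is_atom_def)
    have "is_atom T (h b) (h x)" "is_atom T (h b) (h y)" using hatom b xS yS x y by auto
    moreover have "h x \<noteq> h y" using inj_onD[OF inj] xS yS xy by blast
    ultimately obtain c' where c': "c' \<in> pfaces T" "plt T (h x) c'" "plt T (h y) c'"
      "\<forall>z\<in>pfaces T. plt T z c' \<longrightarrow> z = h b \<or> z = h x \<or> z = h y"
      using pT hT[OF b] hleast[OF b bl] by blast
    obtain c where c: "c \<in> pfaces S" "c' = h c" using pre c'(1) by blast
    show "\<exists>c\<in>pfaces S. plt S x c \<and> plt S y c \<and> (\<forall>z\<in>pfaces S. plt S z c \<longrightarrow> z = b \<or> z = x \<or> z = y)"
    proof (intro bexI conjI ballI impI)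
      show "plt S x c" using hplt xS c c' by simp
      show "plt S y c" using hplt yS c c' by simp
      show "c \<in> pfaces S" using c by simp
    next
      fix z assume z: "z \<in> pfaces S" "plt S z c"
      then have "plt T (h z) c'" using hplt c by simp
      then have "h z = h b \<or> h z = h x \<or> h z = h y" using c'(4) hT z(1) by blast
      then show "z = b \<or> z = x \<or> z = y" using inj_onD[OF inj] z(1) b xS yS by blast
    qed
  qed
  show "atoms_le T k \<Longrightarrow> atoms_le S k"
    unfolding atoms_le_def
  proof (intro ballI impI)
    fix b assume aT: "\<forall>b\<in>pfaces T. (\<forall>z\<in>pfaces T. pleq T b z) \<longrightarrow> finite {x. is_atom T b x} \<and> card {x. is_atom T b x} \<le> k"
      and b: "b \<in> pfaces S" and bl: "\<forall>z\<in>pfaces S. pleq S b z"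
    have "finite {x. is_atom T (h b) x} \<and> card {x. is_atom T (h b) x} \<le> k"
      using aT hT[OF b] hleast[OF b bl] by blast
    then show "finite {x. is_atom S b x} \<and> card {x. is_atom S b x} \<le> k"
      using bij_betw_finite[OF atset[OF b]] bij_betw_same_card[OF atset[OF b]] by simp
  qed
  show "atoms_ge T k \<Longrightarrow> atoms_ge S k"
    unfolding atoms_ge_def
  proof (intro ballI impI)
    fix b assume aT: "\<forall>b\<in>pfaces T. (\<forall>z\<in>pfaces T. pleq T b z) \<longrightarrow> k \<le> card {x. is_atom T b x}"
      and b: "b \<in> pfaces S" and bl: "\<forall>z\<in>pfaces S. pleq S b z"
    have "k \<le> card {x. is_atom T (h b) x}"
      using aT hT[OF b] hleast[OF b bl] by blast
    then show "k \<le> card {x. is_atom S b x}"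
      using bij_betw_same_card[OF atset[OF b]] by simp
  qed
qed

lemma poset_iso_transport:
  assumes "poset_iso S T"
  shows "propA T \<Longrightarrow> propA S" and "atoms_le T k \<Longrightarrow> atoms_le S k" and "atoms_ge T k \<Longrightarrow> atoms_ge S k"
  using assms iso_transport unfolding poset_iso_def by metis+

definition good :: "'a face_poset \<Rightarrow> bool" where
  "good P \<longleftrightarrow> is_polytope P 4 \<and>
    (\<forall>b F. is_least P b \<and> F \<in> pfaces P \<and> face_rank P F = 3 \<longrightarrow>
        propA (section_of P b F) \<and> atoms_ge (section_of P b F) 4) \<and>
    (\<forall>v t. v \<in> pfaces P \<and> face_rank P v = 0 \<and> is_greatest P t \<longrightarrow>
        propA (section_of P v t) \<and> atoms_le (section_of P v t) 3)"

lemma good_from: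
  assumes "is_polytope P 4" "facets_iso P 4 hemicube" "vertex_figures_iso P hemioctahedron"
  shows "good P"
  unfolding good_def
proof (intro conjI allI impI)
  show "is_polytope P 4" by fact
next
  fix b F assume h: "is_least P b \<and> F \<in> pfaces P \<and> face_rank P F = 3"
  then have "poset_iso (section_of P b F) hemicube" using assms(2) unfolding facets_iso_def by simp
  then show "propA (section_of P b F)" "atoms_ge (section_of P b F) 4"
    using poset_iso_transport H_propA H_atoms_ge by blast+
next
  fix v t assume h: "v \<in> pfaces P \<and> face_rank P v = 0 \<and> is_greatest P t"
  then have "poset_iso (section_of P v t) hemioctahedron" using assms(3) unfolding vertex_figures_iso_def by simp
  then show "propA (section_of P v t)" "atoms_le (section_of P v t) 3"
    using poset_iso_transport O_propA O_atoms_le by blast+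
qed

definition adjv :: "'a face_poset \<Rightarrow> 'a \<Rightarrow> 'a \<Rightarrow> bool" where
  "adjv P v w \<longleftrightarrow> (\<exists>e\<in>pfaces P. face_rank P e = 1 \<and> plt P v e \<and> plt P w e)"

definition Nbh :: "'a face_poset \<Rightarrow> 'a \<Rightarrow> 'a set" where
  "Nbh P v = {w \<in> pfaces P. face_rank P w = 0 \<and> (w = v \<or> adjv P v w)}"

definition VF :: "'a face_poset \<Rightarrow> 'a \<Rightarrow> 'a set" where
  "VF P F = {w \<in> pfaces P. face_rank P w = 0 \<and> pleq P w F}"

definition Dm :: "'a face_poset \<Rightarrow> 'a \<Rightarrow> 'a \<Rightarrow> 'a set" where
  "Dm P x y = {z \<in> pfaces P. plt P x z \<and> plt P z y}"

context
  fixes P :: "'a face_poset" and R :: "'b face_poset" and g :: "'a \<Rightarrow> 'b" and bot top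
  assumes good: "good P" and polR: "is_polytope R 4" and cov: "is_covering P R g"
    and bot: "is_least P bot" and top: "is_greatest P top"
begin

lemma polP: "is_polytope P 4" using good by (simp add: good_def)
lemma gp: "gp P 4" using pol_gp[OF polP] .
lemma gpR: "gp R 4" using pol_gp[OF polR] .

lemma botf: "bot \<in> pfaces P" using bot by (simp add: is_least_def)
lemma topf: "top \<in> pfaces P" using top by (simp add: is_greatest_def)
lemma bot_le: "x \<in> pfaces P \<Longrightarrow> pleq P bot x" using bot by (simp add: is_least_def)
lemma le_top: "x \<in> pfaces P \<Longrightarrow> pleq P x top" using top by (simp add: is_greatest_def)
lemma rbot: "face_rank P bot = -1" using rank_least[OF gp bot] .
lemma rtop: "face_rank P top = 4" using rank_greatest[OF gp top] by simp

lemma plt_bot: "x \<in> pfaces P \<Longrightarrow> face_rank P x \<ge> 0 \<Longrightarrow> plt P bot x"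
  using bot_le rbot by (auto simp: plt_def)

lemma plt_top: "x \<in> pfaces P \<Longrightarrow> face_rank P x \<le> 3 \<Longrightarrow> plt P x top"
  using le_top rtop by (auto simp: plt_def)

lemma rk_pos: "x \<in> pfaces P \<Longrightarrow> face_rank P x \<ge> -1" using rank_range[OF gp] by blast
lemma rk_le4: "x \<in> pfaces P \<Longrightarrow> face_rank P x \<le> 4" using rank_range[OF gp] by force

lemma prank: "x \<in> pfaces P \<Longrightarrow> y \<in> pfaces P \<Longrightarrow> plt P x y \<Longrightarrow> face_rank P x < face_rank P y"
  using plt_rank[OF gp] by blast

lemma edges_at:
  assumes v: "v \<in> pfaces P" "face_rank P v = 0"
  shows "finite {e \<in> pfaces P. face_rank P e = 1 \<and> plt P v e} \<and> card {e \<in> pfaces P. face_rank P e = 1 \<and> plt P v e} \<le> 3"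
proof -
  let ?S = "section_of P v top"
  have al: "atoms_le ?S 3" using good v top unfolding good_def by blast
  have vS: "v \<in> pfaces ?S" using v le_top gp_refl[OF gp] by (simp add: sec_faces)
  have vl: "\<forall>z\<in>pfaces ?S. pleq ?S v z" by (simp add: sec_faces sec_le)
  have fa: "finite {x. is_atom ?S v x} \<and> card {x. is_atom ?S v x} \<le> 3"
    using al vS vl unfolding atoms_le_def by blast
  have sub: "{e \<in> pfaces P. face_rank P e = 1 \<and> plt P v e} \<subseteq> {x. is_atom ?S v x}"
  proof
    fix e assume e: "e \<in> {e \<in> pfaces P. face_rank P e = 1 \<and> plt P v e}"
    show "e \<in> {x. is_atom ?S v x}"
      unfolding mem_Collect_eq is_atom_def sec_plt
    proof (intro conjI ballI impI)
      show "e \<in> pfaces ?S" using e le_top by (simp add: sec_faces plt_def)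
      show "plt P v e" using e by simp
    next
      fix z assume z: "z \<in> pfaces ?S" "plt P v z"
      have zf: "z \<in> pfaces P" using z by (simp add: sec_faces)
      have ef: "e \<in> pfaces P" "face_rank P e = 1" using e by auto
      show "\<not> plt P z e"
      proof
        assume "plt P z e"
        then have "face_rank P z < 1" using prank[OF zf ef(1)] ef(2) by fastforce
        moreover have "face_rank P z > 0" using prank v zf z by fastforce
        ultimately show False by linarith
      qed
    qed
  qed
  then show ?thesis using fa card_mono finite_subset by (metis (no_types, lifting) order_trans)
qed

lemma facet_atoms:
  assumes F: "F \<in> pfaces P" "face_rank P F = 3"
  shows "{x. is_atom (section_of P bot F) bot x} = VF P F"
proof
  let ?S = "section_of P bot F"
  show "{x. is_atom ?S bot x} \<subseteq> VF P F"
  proof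
    fix x assume "x \<in> {x. is_atom ?S bot x}"
    then have A: "is_atom ?S bot x" by simp
    then have xf: "x \<in> pfaces P" and xF: "pleq P x F" and bx: "plt P bot x"
      by (auto simp: is_atom_def sec_faces sec_plt)
    have "face_rank P x = 0"
    proof (rule ccontr)
      assume "face_rank P x \<noteq> 0"
      moreover have "face_rank P x > -1" using prank[OF botf xf bx] rbot by simp
      ultimately have r1: "face_rank P x \<ge> 1" by linarith
      obtain \<Phi> where \<Phi>: "is_flag P \<Phi>" "x \<in> \<Phi>" using face_in_flag[OF gp xf] by blast
      obtain z where z: "z \<in> \<Phi>" "face_rank P z = 0" using flag_has_rank[OF gp \<Phi>(1), of 0] by auto
      have zx: "plt P z x" using flag_lt_by_rank[OF gp \<Phi>(1) z(1) \<Phi>(2)] z r1 by simp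
      have zf: "z \<in> pfaces P" using z \<Phi> flag_sub by blast
      have "z \<in> pfaces ?S" using zf bot_le gp_trans[OF gp zf xf F(1)] zx xF
        by (simp add: sec_faces plt_def)
      moreover have "plt P bot z" using plt_bot zf z by simp
      ultimately show False using A zx by (simp add: is_atom_def sec_plt)
    qed
    then show "x \<in> VF P F" using xf xF by (simp add: VF_def)
  qed
next
  let ?S = "section_of P bot F"
  show "VF P F \<subseteq> {x. is_atom ?S bot x}"
  proof
    fix w assume "w \<in> VF P F"
    then have w: "w \<in> pfaces P" "face_rank P w = 0" "pleq P w F" by (auto simp: VF_def)
    show "w \<in> {x. is_atom ?S bot x}"
      unfolding mem_Collect_eq is_atom_def sec_plt
    proof (intro conjI ballI impI)
      show "w \<in> pfaces ?S" using w bot_le by (simp add: sec_faces)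
      show "plt P bot w" using plt_bot w by simp
    next
      fix z assume z: "z \<in> pfaces ?S" "plt P bot z"
      have zf: "z \<in> pfaces P" using z by (simp add: sec_faces)
      show "\<not> plt P z w"
      proof
        assume "plt P z w"
        then have "face_rank P z < 0" using prank zf w by fastforce
        moreover have "face_rank P z > -1" using prank[OF botf zf] z rbot by fastforce
        ultimately show False by linarith
      qed
    qed
  qed
qed

lemma VF_card:
  assumes F: "F \<in> pfaces P" "face_rank P F = 3"
  shows "finite (VF P F) \<and> card (VF P F) \<ge> 4"
proof -
  let ?S = "section_of P bot F"
  have ag: "atoms_ge ?S 4" using good bot F unfolding good_def by blast
  have bS: "bot \<in> pfaces ?S" using botf F bot_le by (simp add: sec_faces)
  have bl: "\<forall>z\<in>pfaces ?S. pleq ?S bot z" by (simp add: sec_faces sec_le)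
  have "4 \<le> card {x. is_atom ?S bot x}" using ag bS bl unfolding atoms_ge_def by blast
  then show ?thesis using facet_atoms[OF F] by (metis card.infinite not_numeral_le_zero)
qed

lemma adj_in_facet:
  assumes F: "F \<in> pfaces P" "face_rank P F = 3" and v: "v \<in> VF P F" and w: "w \<in> VF P F" and vw: "v \<noteq> w"
  shows "adjv P v w"
proof -
  let ?S = "section_of P bot F"
  have pA: "propA ?S" using good bot F unfolding good_def by blast
  have bS: "bot \<in> pfaces ?S" using botf F bot_le by (simp add: sec_faces)
  have bl: "\<forall>z\<in>pfaces ?S. pleq ?S bot z" by (simp add: sec_faces sec_le)
  have av: "is_atom ?S bot v" and aw: "is_atom ?S bot w" using facet_atoms[OF F] v w by auto
  obtain c where c: "c \<in> pfaces ?S" "plt P v c" "plt P w c"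
      "\<forall>z\<in>pfaces ?S. plt P z c \<longrightarrow> z = bot \<or> z = v \<or> z = w"
    using pA bS bl av aw vw unfolding propA_def sec_plt by blast
  have cf: "c \<in> pfaces P" and cF: "pleq P c F" using c by (auto simp: sec_faces)
  have vv: "v \<in> pfaces P" "face_rank P v = 0" "pleq P v F" using v by (auto simp: VF_def)
  have ww: "w \<in> pfaces P" "face_rank P w = 0" "pleq P w F" using w by (auto simp: VF_def)
  obtain \<Phi> where \<Phi>: "is_flag P \<Phi>" "v \<in> \<Phi>" "c \<in> \<Phi>"
    using two_in_flag[OF gp vv(1) cf] c(2) by (auto simp: plt_def)
  have bF: "bot \<in> \<Phi>" using least_in_flag[OF gp bot \<Phi>(1)] .
  have wn: "w \<notin> \<Phi>" using flag_rank_inj[OF gp \<Phi>(1) \<Phi>(2)] vv ww vw by force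
  have rc: "face_rank P c > 0" using prank[OF vv(1) cf c(2)] vv by simp
  have "{y \<in> \<Phi>. plt P y c} = {bot, v}"
  proof
    show "{y \<in> \<Phi>. plt P y c} \<subseteq> {bot, v}"
    proof
      fix y assume y: "y \<in> {y \<in> \<Phi>. plt P y c}"
      have yf: "y \<in> pfaces P" using y \<Phi>(1) flag_sub by blast
      have "y \<in> pfaces ?S" using yf bot_le gp_trans[OF gp yf cf F(1)] y cF
        by (simp add: sec_faces plt_def)
      then have "y = bot \<or> y = v \<or> y = w" using c(4) y by blast
      then show "y \<in> {bot, v}" using wn y by blast
    qed
  next
    show "{bot, v} \<subseteq> {y \<in> \<Phi>. plt P y c}"
      using bF \<Phi>(2) c(2) plt_bot[OF cf] rc by auto
  qed
  moreover have "bot \<noteq> v" using rbot vv by auto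
  ultimately have "rk P \<Phi> c = 2" unfolding rk_def by simp
  then have "face_rank P c = 1" using face_rank_eq[OF gp \<Phi>(1) \<Phi>(3)] by simp
  then show ?thesis unfolding adjv_def using cf c by blast
qed

lemma edge_diamond:
  assumes e: "e \<in> pfaces P" "face_rank P e = 1"
  shows "card (Dm P bot e) = 2"
proof -
  have "plt P bot e" using plt_bot e by simp
  moreover have "face_rank P e = face_rank P bot + 2" using e rbot by simp
  ultimately show ?thesis using polP botf e unfolding is_polytope_def diamond_condition_def Dm_def by blast
qed

lemma vert_in_Dm:
  assumes "w \<in> pfaces P" "face_rank P w = 0" "plt P w e"
  shows "w \<in> Dm P bot e"
  using assms plt_bot by (simp add: Dm_def)

lemma facet_above:
  assumes x: "x \<in> pfaces P" "face_rank P x \<le> 2"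
  shows "\<exists>F\<in>pfaces P. face_rank P F = 3 \<and> pleq P x F"
proof -
  obtain \<Phi> where \<Phi>: "is_flag P \<Phi>" "x \<in> \<Phi>" using face_in_flag[OF gp x(1)] by blast
  obtain F where F: "F \<in> \<Phi>" "face_rank P F = 3" using flag_has_rank[OF gp \<Phi>(1), of 3] by auto
  have "plt P x F" using flag_lt_by_rank[OF gp \<Phi>(1) \<Phi>(2) F(1)] x F by simp
  then show ?thesis using F \<Phi> flag_sub by (auto simp: plt_def)
qed

lemma Nbh_eq_VF:
  assumes v: "v \<in> pfaces P" "face_rank P v = 0" and F: "F \<in> pfaces P" "face_rank P F = 3" and vF: "pleq P v F"
  shows "Nbh P v = VF P F"
proof -
  have vV: "v \<in> VF P F" using v vF by (simp add: VF_def)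
  have sub: "VF P F \<subseteq> Nbh P v"
  proof
    fix w assume w: "w \<in> VF P F"
    then have "w = v \<or> adjv P v w" using adj_in_facet[OF F vV w] by blast
    then show "w \<in> Nbh P v" using w by (simp add: Nbh_def VF_def)
  qed
  let ?E = "{e \<in> pfaces P. face_rank P e = 1 \<and> plt P v e}"
  define f where "f w = (SOME e. e \<in> pfaces P \<and> face_rank P e = 1 \<and> plt P v e \<and> plt P w e)" for w
  have fprop: "f w \<in> pfaces P \<and> face_rank P (f w) = 1 \<and> plt P v (f w) \<and> plt P w (f w)"
    if "w \<in> Nbh P v - {v}" for w
  proof -
    have "adjv P v w" using that by (auto simp: Nbh_def)
    then obtain e where "e \<in> pfaces P \<and> face_rank P e = 1 \<and> plt P v e \<and> plt P w e"
      unfolding adjv_def by blast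
    then show ?thesis unfolding f_def
      by (rule someI[where P="\<lambda>e. e \<in> pfaces P \<and> face_rank P e = 1 \<and> plt P v e \<and> plt P w e"])
  qed
  have fmap: "f ` (Nbh P v - {v}) \<subseteq> ?E" using fprop by blast
  have finj: "inj_on f (Nbh P v - {v})"
  proof (rule inj_onI)
    fix w w' assume w: "w \<in> Nbh P v - {v}" and w': "w' \<in> Nbh P v - {v}" and eq: "f w = f w'"
    show "w = w'"
    proof (rule ccontr)
      assume ne: "w \<noteq> w'"
      let ?e = "f w"
      have pe: "?e \<in> pfaces P" "face_rank P ?e = 1" "plt P v ?e" "plt P w ?e" "plt P w' ?e"
        using fprop[OF w] fprop[OF w'] eq by auto
      have ww: "w \<in> pfaces P" "face_rank P w = 0" "w' \<in> pfaces P" "face_rank P w' = 0"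
        using w w' by (auto simp: Nbh_def)
      have s1: "{v, w, w'} \<subseteq> Dm P bot ?e" using vert_in_Dm v ww pe by auto
      have s2: "card {v, w, w'} = 3" using w w' ne by auto
      have s3: "card (Dm P bot ?e) = 2" using edge_diamond pe by simp
      have s4: "finite (Dm P bot ?e)" using s3 by (metis card.infinite zero_neq_numeral)
      show False using card_mono[OF s4 s1] s2 s3 by simp
    qed
  qed
  have Ef: "finite ?E" and Ec: "card ?E \<le> 3" using edges_at[OF v] by auto
  have fin1: "finite (Nbh P v - {v})" using finj fmap Ef by (meson finite_imageD finite_subset)
  have c1: "card (Nbh P v - {v}) \<le> 3" using card_inj_on_le[OF finj fmap Ef] Ec by simp
  have finN: "finite (Nbh P v)" using fin1 by simp
  have cN: "card (Nbh P v) \<le> 4"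
  proof -
    have "card (Nbh P v) \<le> card (insert v (Nbh P v - {v}))" using fin1 by (intro card_mono) auto
    also have "\<dots> = Suc (card (Nbh P v - {v}))"
      by (rule card_insert_disjoint[OF fin1]) blast
    finally show ?thesis using c1 by simp
  qed
  have "card (VF P F) \<ge> 4" using VF_card[OF F] by simp
  then have "card (VF P F) = card (Nbh P v)" using card_mono[OF finN sub] cN by simp
  then show ?thesis using card_subset_eq[OF finN sub] by simp
qed

lemma self_Nbh: "v \<in> pfaces P \<Longrightarrow> face_rank P v = 0 \<Longrightarrow> v \<in> Nbh P v"
  by (simp add: Nbh_def)

lemma adj_Nbh:
  assumes v: "v \<in> pfaces P" "face_rank P v = 0" and w: "w \<in> pfaces P" "face_rank P w = 0" and a: "adjv P v w"
  shows "Nbh P v = Nbh P w"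
proof -
  obtain e where e: "e \<in> pfaces P" "face_rank P e = 1" "plt P v e" "plt P w e" using a by (auto simp: adjv_def)
  obtain F where F: "F \<in> pfaces P" "face_rank P F = 3" "pleq P e F" using facet_above[OF e(1)] e(2) by auto
  have "pleq P v F" using gp_trans[OF gp v(1) e(1) F(1)] e F by (simp add: plt_def)
  moreover have "pleq P w F" using gp_trans[OF gp w(1) e(1) F(1)] e F by (simp add: plt_def)
  ultimately show ?thesis using Nbh_eq_VF v w F by metis
qed

definition goodflag :: "'a \<Rightarrow> 'a set \<Rightarrow> bool" where
  "goodflag v0 \<Lambda> \<longleftrightarrow> (\<forall>x\<in>\<Lambda>. face_rank P x = 0 \<longrightarrow> Nbh P x = Nbh P v0)"

lemma goodflag_step:
  assumes A: "is_flag P A" and B: "is_flag P B" and adj: "flags_adjacent A B" and gA: "goodflag v0 A"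
  shows "goodflag v0 B"
  unfolding goodflag_def
proof (intro ballI impI)
  fix x assume xB: "x \<in> B" and rx: "face_rank P x = 0"
  show "Nbh P x = Nbh P v0"
  proof (cases "x \<in> A")
    case True then show ?thesis using gA rx by (simp add: goodflag_def)
  next
    case False
    have fA: "finite A" "card A = 6" and fB: "finite B" "card B = 6"
      using gp_flag[OF gp A] gp_flag[OF gp B] by auto
    obtain u where u: "u \<in> A" "face_rank P u = 0" using flag_has_rank[OF gp A, of 0] by auto
    obtain e where e: "e \<in> A" "face_rank P e = 1" using flag_has_rank[OF gp A, of 1] by auto
    have c1: "card (A - B) = 1" using adj by (simp add: flags_adjacent_def)
    then obtain p where p: "A - B = {p}" by (auto simp: card_1_singleton_iff)
    have uB: "u \<notin> B"
    proof
      assume "u \<in> B"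
      then have "u = x" using flag_rank_inj[OF gp B _ xB] u rx by simp
      then show False using False u by simp
    qed
    then have "u = p" using p u by blast
    have eB: "e \<in> B"
    proof (rule ccontr)
      assume "e \<notin> B"
      then have "e = p" using p e by blast
      then show False using \<open>u = p\<close> u e by simp
    qed
    have xe: "plt P x e" using flag_lt_by_rank[OF gp B xB eB] rx e by simp
    have ue: "plt P u e" using flag_lt_by_rank[OF gp A u(1) e(1)] u e by simp
    have ef: "e \<in> pfaces P" using e A flag_sub by blast
    have uf: "u \<in> pfaces P" using u A flag_sub by blast
    have xf: "x \<in> pfaces P" using xB B flag_sub by blast
    have "adjv P u x" unfolding adjv_def using ef e(2) xe ue by blast
    then have "Nbh P u = Nbh P x" using adj_Nbh uf u(2) xf rx by blast
    moreover have "Nbh P u = Nbh P v0" using gA u by (simp add: goodflag_def)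
    ultimately show ?thesis by simp
  qed
qed

lemma all_Nbh:
  assumes v0: "v0 \<in> pfaces P" "face_rank P v0 = 0" and x: "x \<in> pfaces P" "face_rank P x = 0"
  shows "Nbh P x = Nbh P v0"
proof -
  obtain \<Phi>0 where \<Phi>0: "is_flag P \<Phi>0" "v0 \<in> \<Phi>0" using face_in_flag[OF gp v0(1)] by blast
  obtain \<Lambda> where \<Lambda>: "is_flag P \<Lambda>" "x \<in> \<Lambda>" using face_in_flag[OF gp x(1)] by blast
  have g0: "goodflag v0 \<Phi>0" unfolding goodflag_def
    using flag_rank_inj[OF gp \<Phi>0(1) _ \<Phi>0(2)] v0 by auto
  have sfc: "strongly_flag_connected P" using polP by (simp add: is_polytope_def)
  have ex: "\<exists>fs. fs \<noteq> [] \<and> hd fs = \<Phi>0 \<and> last fs = \<Lambda> \<and>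
              (\<forall>\<Lambda>'\<in>set fs. is_flag P \<Lambda>' \<and> \<Phi>0 \<inter> \<Lambda> \<subseteq> \<Lambda>') \<and>
              (\<forall>i. Suc i < length fs \<longrightarrow> flags_adjacent (fs ! i) (fs ! Suc i))"
    using sfc[unfolded strongly_flag_connected_def, rule_format, OF conjI[OF \<Phi>0(1) \<Lambda>(1)]] .
  from ex obtain fs where fsall: "fs \<noteq> [] \<and> hd fs = \<Phi>0 \<and> last fs = \<Lambda> \<and>
              (\<forall>\<Lambda>'\<in>set fs. is_flag P \<Lambda>' \<and> \<Phi>0 \<inter> \<Lambda> \<subseteq> \<Lambda>') \<and>
              (\<forall>i. Suc i < length fs \<longrightarrow> flags_adjacent (fs ! i) (fs ! Suc i))" ..
  have fs: "fs \<noteq> []" "hd fs = \<Phi>0" "last fs = \<Lambda>"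
    "\<forall>\<Lambda>'\<in>set fs. is_flag P \<Lambda>'" "\<forall>i. Suc i < length fs \<longrightarrow> flags_adjacent (fs ! i) (fs ! Suc i)"
    using fsall by blast+
  have "i < length fs \<Longrightarrow> goodflag v0 (fs ! i)" for i
  proof (induction i)
    case 0 then show ?case using fs g0 by (simp add: hd_conv_nth)
  next
    case (Suc i)
    then have "goodflag v0 (fs ! i)" by simp
    moreover have "is_flag P (fs ! i)" "is_flag P (fs ! Suc i)" using fs(4) Suc by auto
    moreover have "flags_adjacent (fs ! i) (fs ! Suc i)" using fs(5) Suc by blast
    ultimately show ?case using goodflag_step by blast
  qed
  then have "goodflag v0 (last fs)" using fs(1) by (simp add: last_conv_nth)
  then show ?thesis using fs(3) \<Lambda> x by (simp add: goodflag_def)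
qed

lemma vert_adj:
  assumes v: "v \<in> pfaces P" "face_rank P v = 0" and w: "w \<in> pfaces P" "face_rank P w = 0" and ne: "v \<noteq> w"
  shows "adjv P v w"
proof -
  have "Nbh P w = Nbh P v" using all_Nbh v w by blast
  then have "w \<in> Nbh P v" using self_Nbh w by blast
  then show ?thesis using ne by (simp add: Nbh_def)
qed

lemma vertex_inj:
  assumes v: "v \<in> pfaces P" "face_rank P v = 0" and w: "w \<in> pfaces P" "face_rank P w = 0" and eq: "g v = g w"
  shows "v = w"
proof (rule ccontr)
  assume ne: "v \<noteq> w"
  obtain e where e: "e \<in> pfaces P" "face_rank P e = 1" "plt P v e" "plt P w e"
    using vert_adj[OF v w ne] by (auto simp: adjv_def)
  obtain \<Phi> where \<Phi>: "is_flag P \<Phi>" "v \<in> \<Phi>" "e \<in> \<Phi>"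
    using two_in_flag[OF gp v(1) e(1)] e by (auto simp: plt_def)
  have bF: "bot \<in> \<Phi>" using least_in_flag[OF gp bot \<Phi>(1)] .
  have "g v \<noteq> g w"
    using swap2[OF gp cov \<Phi>(1) bF \<Phi>(2) \<Phi>(3), of 0 w] rbot v e w plt_bot ne by simp
  then show False using eq by simp
qed

lemma edge_inj:
  assumes e: "e \<in> pfaces P" "face_rank P e = 1" and e': "e' \<in> pfaces P" "face_rank P e' = 1" and eq: "g e = g e'"
  shows "e = e'"
proof (rule ccontr)
  assume ne: "e \<noteq> e'"
  have Dr: "z \<in> Dm P bot y \<Longrightarrow> y \<in> pfaces P \<Longrightarrow> face_rank P y = 1 \<Longrightarrow> z \<in> pfaces P \<and> face_rank P z = 0 \<and> plt P z y" for z y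
  proof -
    assume z: "z \<in> Dm P bot y" and y: "y \<in> pfaces P" "face_rank P y = 1"
    then have zf: "z \<in> pfaces P" and bz: "plt P bot z" and zy: "plt P z y" by (auto simp: Dm_def)
    have "face_rank P z > -1" using prank[OF botf zf bz] rbot by simp
    moreover have "face_rank P z < 1" using prank[OF zf y(1) zy] y by simp
    ultimately show ?thesis using zf zy by simp
  qed
  show False
  proof (cases "Dm P bot e \<inter> Dm P bot e' = {}")
    case False
    then obtain u where u: "u \<in> Dm P bot e" "u \<in> Dm P bot e'" by blast
    have uu: "u \<in> pfaces P" "face_rank P u = 0" "plt P u e" "plt P u e'" using Dr u e e' by auto
    let ?S = "section_of P u top"
    have pA: "propA ?S" using good uu top unfolding good_def by blast
    have uS: "u \<in> pfaces ?S" using uu le_top gp_refl[OF gp] by (simp add: sec_faces)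
    have ul: "\<forall>z\<in>pfaces ?S. pleq ?S u z" by (simp add: sec_faces sec_le)
    have atom: "is_atom ?S u y" if y: "y \<in> pfaces P" "face_rank P y = 1" "plt P u y" for y
      unfolding is_atom_def sec_plt
    proof (intro conjI ballI impI)
      show "y \<in> pfaces ?S" using y le_top by (simp add: sec_faces plt_def)
      show "plt P u y" using y by simp
    next
      fix z assume z: "z \<in> pfaces ?S" "plt P u z"
      have zf: "z \<in> pfaces P" using z by (simp add: sec_faces)
      show "\<not> plt P z y"
      proof
        assume "plt P z y"
        then have "face_rank P z < 1" using prank zf y by fastforce
        moreover have "face_rank P z > 0" using prank[OF uu(1) zf] z uu by fastforce
        ultimately show False by linarith
      qed
    qed
    obtain c where c: "c \<in> pfaces ?S" "plt P e c" "plt P e' c"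
      "\<forall>z\<in>pfaces ?S. plt P z c \<longrightarrow> z = u \<or> z = e \<or> z = e'"
      using pA uS ul atom[OF e uu(3)] atom[OF e' uu(4)] ne unfolding propA_def sec_plt by blast
    have cf: "c \<in> pfaces P" using c by (simp add: sec_faces)
    obtain \<Phi> where \<Phi>: "is_flag P \<Phi>" "u \<in> \<Phi>" "e \<in> \<Phi>" "c \<in> \<Phi>"
      using three_in_flag[OF gp uu(1) e(1) cf] uu c by (auto simp: plt_def)
    have bF: "bot \<in> \<Phi>" using least_in_flag[OF gp bot \<Phi>(1)] .
    have e'n: "e' \<notin> \<Phi>" using flag_rank_inj[OF gp \<Phi>(1) \<Phi>(3)] e e' ne by force
    have rc: "face_rank P c > 1" using prank[OF e(1) cf c(2)] e by simp
    have uc: "plt P u c" using plt_trans1[OF gp uu(1) e(1) cf uu(3) c(2)] .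
    have "{y \<in> \<Phi>. plt P y c} = {bot, u, e}"
    proof
      show "{y \<in> \<Phi>. plt P y c} \<subseteq> {bot, u, e}"
      proof
        fix y assume y: "y \<in> {y \<in> \<Phi>. plt P y c}"
        have yf: "y \<in> pfaces P" using y \<Phi>(1) flag_sub by blast
        show "y \<in> {bot, u, e}"
        proof (cases "pleq P u y")
          case True
          then have "y \<in> pfaces ?S" using yf le_top by (simp add: sec_faces)
          then have "y = u \<or> y = e \<or> y = e'" using c(4) y by blast
          then show ?thesis using e'n y by blast
        next
          case False
          then have "pleq P y u" "y \<noteq> u" using flag_cmp[OF \<Phi>(1) \<Phi>(2)] y gp_refl[OF gp uu(1)] by auto
          then have "face_rank P y < 0" using prank[OF yf uu(1)] uu by (simp add: plt_def)
          then have "face_rank P y = -1" using rk_pos[OF yf] by linarith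
          then have "y = bot" using rank_m1_least[OF gp bot yf] by simp
          then show ?thesis by simp
        qed
      qed
    next
      show "{bot, u, e} \<subseteq> {y \<in> \<Phi>. plt P y c}"
        using bF \<Phi> c(2) uc plt_bot[OF cf] rc by auto
    qed
    moreover have "card {bot, u, e} = 3"
    proof -
      have "bot \<noteq> u" "bot \<noteq> e" "u \<noteq> e" using rbot uu(2) e(2) by (metis zero_neq_neg_one zero_neq_one one_neq_neg_one)+
      then show ?thesis by simp
    qed
    ultimately have "rk P \<Phi> c = 3" unfolding rk_def by simp
    then have rc2: "face_rank P c = 2" using face_rank_eq[OF gp \<Phi>(1) \<Phi>(4)] by simp
    have "g e \<noteq> g e'"
      using swap2[OF gp cov \<Phi>(1) \<Phi>(2) \<Phi>(3) \<Phi>(4), of 1 e'] uu e rc2 e' c ne by simp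
    then show False using eq by simp
  next
    case True
    have c2: "card (Dm P bot e) = 2" "card (Dm P bot e') = 2" using edge_diamond e e' by auto
    obtain a b where ab: "Dm P bot e = {a, b}" "a \<noteq> b" using c2(1) by (auto simp: card_2_iff)
    obtain c d where cd: "Dm P bot e' = {c, d}" "c \<noteq> d" using c2(2) by (auto simp: card_2_iff)
    have aa: "a \<in> pfaces P \<and> face_rank P a = 0 \<and> plt P a e" using Dr[of a e] ab e by auto
    have bb: "b \<in> pfaces P \<and> face_rank P b = 0 \<and> plt P b e" using Dr[of b e] ab e by auto
    have cc: "c \<in> pfaces P \<and> face_rank P c = 0 \<and> plt P c e'" using Dr[of c e'] cd e' by auto
    have dd: "d \<in> pfaces P \<and> face_rank P d = 0 \<and> plt P d e'" using Dr[of d e'] cd e' by auto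
    have dis: "a \<noteq> c" "a \<noteq> d" "b \<noteq> c" "b \<noteq> d" using True ab cd by auto
    have gdis: "g a \<noteq> g b" "g a \<noteq> g c" "g a \<noteq> g d" "g b \<noteq> g c" "g b \<noteq> g d" "g c \<noteq> g d"
      using vertex_inj aa bb cc dd dis ab(2) cd(2) by metis+
    obtain bR where bR: "is_least R bR" using polR by (auto simp: is_polytope_def)
    have bRf: "bR \<in> pfaces R" using bR by (simp add: is_least_def)
    have rbR: "face_rank R bR = -1" using rank_least[OF gpR bR] .
    note covr = cov_rank[OF cov] and covi = cov_in[OF cov] and covo = cov_le[OF cov]
    let ?DR = "{z \<in> pfaces R. plt R bR z \<and> plt R z (g e)}"
    have inDR: "g z \<in> ?DR" if z: "z \<in> pfaces P" "face_rank P z = 0" and y: "y \<in> pfaces P" "face_rank P y = 1" "plt P z y" "g y = g e" for z y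
    proof -
      have "pleq R bR (g z)" using bR covi z by (simp add: is_least_def)
      moreover have "bR \<noteq> g z" using rbR covr z by auto
      moreover have "pleq R (g z) (g e)" using covo[OF z(1) y(1)] y by (simp add: plt_def)
      moreover have "g z \<noteq> g e" using covr z y e by (metis zero_neq_one)
      ultimately show ?thesis using covi z by (simp add: plt_def)
    qed
    have sub: "{g a, g b, g c, g d} \<subseteq> ?DR"
      using inDR aa bb cc dd e e' eq by auto
    have "plt R bR (g e)" using bR covi e rbR covr by (auto simp: is_least_def plt_def)
    moreover have "face_rank R (g e) = face_rank R bR + 2" using covr e rbR by simp
    ultimately have "card ?DR = 2"
      using polR bRf covi e unfolding is_polytope_def diamond_condition_def by blast
    moreover have "card {g a, g b, g c, g d} = 4" using gdis by auto
    moreover have "finite ?DR" using calculation(1) by (metis card.infinite zero_neq_numeral)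
    ultimately show False using card_mono[OF _ sub] by simp
  qed
qed

end

definition dualp :: "'a face_poset \<Rightarrow> 'a face_poset" where
  "dualp P = \<lparr>pfaces = pfaces P, pleq = (\<lambda>x y. pleq P y x)\<rparr>"

lemma dual_faces[simp]: "pfaces (dualp P) = pfaces P" by (simp add: dualp_def)
lemma dual_le[simp]: "pleq (dualp P) x y = pleq P y x" by (simp add: dualp_def)
lemma dual_plt[simp]: "plt (dualp P) x y = plt P y x" by (auto simp: plt_def)

lemma chain_dual[simp]: "is_chain (dualp P) C = is_chain P C"
  unfolding is_chain_def by auto

lemma flag_dual[simp]: "is_flag (dualp P) \<Phi> = is_flag P \<Phi>"
  unfolding is_flag_def by simp

lemma poset_dual: "is_poset P \<Longrightarrow> is_poset (dualp P)"
  unfolding is_poset_def dual_faces dual_le by blast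

lemma least_dual[simp]: "is_least (dualp P) x = is_greatest P x"
  by (simp add: is_least_def is_greatest_def)
lemma greatest_dual[simp]: "is_greatest (dualp P) x = is_least P x"
  by (simp add: is_least_def is_greatest_def)

lemma gp_dual: assumes "gp P n" shows "gp (dualp P) n"
proof -
  have "is_poset P" "\<forall>\<Phi>. is_flag P \<Phi> \<longrightarrow> finite \<Phi> \<and> card \<Phi> = n + 2" using assms by (auto simp: gp_def)
  then show ?thesis unfolding gp_def using poset_dual[of P] by simp
qed

lemma rank_dual:
  assumes gp: "gp P n" and x: "x \<in> pfaces P"
  shows "face_rank (dualp P) x = int n - 1 - face_rank P x"
proof -
  obtain \<Phi> where F: "is_flag P \<Phi>" "x \<in> \<Phi>" using face_in_flag[OF gp x] by blast
  have fin: "finite \<Phi>" "card \<Phi> = n + 2" using gp_flag[OF gp F(1)] by auto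
  let ?B = "{y \<in> \<Phi>. plt P y x}" and ?U = "{y \<in> \<Phi>. plt P x y}"
  have part: "\<Phi> = ?B \<union> {x} \<union> ?U"
    using F flag_cmp[OF F(1)] by (auto simp: plt_def)
  have d1: "?B \<inter> {x} = {}" by (auto simp: plt_def)
  have d2: "(?B \<union> {x}) \<inter> ?U = {}"
  proof -
    have "\<not> (plt P y x \<and> plt P x y)" if "y \<in> \<Phi>" for y
      using gp_antisym[OF gp] flag_sub[OF F(1)] that F(2) by (auto simp: plt_def)
    then show ?thesis by (auto simp: plt_def)
  qed
  have "card \<Phi> = card ?B + 1 + card ?U"
  proof -
    have "card (?B \<union> {x} \<union> ?U) = card (?B \<union> {x}) + card ?U"
      using d2 fin by (intro card_Un_disjoint) auto
    also have "card (?B \<union> {x}) = card ?B + 1"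
      using d1 fin by (subst card_Un_disjoint) auto
    finally show ?thesis using part by simp
  qed
  moreover have "face_rank (dualp P) x = int (card ?U) - 1"
    using face_rank_eq[OF gp_dual[OF gp], of \<Phi> x] F by (simp add: rk_def)
  moreover have "face_rank P x = int (card ?B) - 1"
    using face_rank_eq[OF gp F] by (simp add: rk_def)
  ultimately show ?thesis using fin by simp
qed

lemma pol_dual:
  assumes pol: "is_polytope P n"
  shows "is_polytope (dualp P) n"
proof -
  have gp: "gp P n" using pol_gp[OF pol] .
  have sfc: "strongly_flag_connected (dualp P)"
    using pol unfolding is_polytope_def strongly_flag_connected_def flag_dual by blast
  have dia: "diamond_condition (dualp P)"
    unfolding diamond_condition_def
  proof (intro ballI impI)
    fix x y assume x: "x \<in> pfaces (dualp P)" and y: "y \<in> pfaces (dualp P)"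
      and h: "plt (dualp P) x y \<and> face_rank (dualp P) y = face_rank (dualp P) x + 2"
    have xf: "x \<in> pfaces P" and yf: "y \<in> pfaces P" using x y by auto
    have "plt P y x" using h by simp
    moreover have "face_rank P x = face_rank P y + 2"
      using h rank_dual[OF gp xf] rank_dual[OF gp yf] by simp
    ultimately have "card {z \<in> pfaces P. plt P y z \<and> plt P z x} = 2"
      using pol xf yf unfolding is_polytope_def diamond_condition_def by blast
    moreover have "{z \<in> pfaces (dualp P). plt (dualp P) x z \<and> plt (dualp P) z y} = {z \<in> pfaces P. plt P y z \<and> plt P z x}"
      by auto
    ultimately show "card {z \<in> pfaces (dualp P). plt (dualp P) x z \<and> plt (dualp P) z y} = 2" by simp
  qed
  have "is_poset P" using pol by (simp add: is_polytope_def)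
  then have pos: "is_poset (dualp P)" by (rule poset_dual)
  obtain b t where bt: "is_least P b" "is_greatest P t" using pol by (auto simp: is_polytope_def)
  then have bt': "is_least (dualp P) t" "is_greatest (dualp P) b" by simp_all
  have fl: "\<forall>\<Phi>. is_flag (dualp P) \<Phi> \<longrightarrow> finite \<Phi> \<and> card \<Phi> = n + 2"
    using pol by (simp add: is_polytope_def)
  show ?thesis unfolding is_polytope_def using pos bt' fl sfc dia by blast
qed

lemma iso_dual: "poset_iso S T \<Longrightarrow> poset_iso (dualp S) (dualp T)"
  unfolding poset_iso_def dual_faces dual_le by metis

lemma iso_cong:
  assumes "pfaces S = pfaces S'" "pleq S = pleq S'" "pfaces T = pfaces T'" "pleq T = pleq T'"
  shows "poset_iso S T = poset_iso S' T'"
  unfolding poset_iso_def using assms by simp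

lemma sec_dual_faces: "pfaces (section_of (dualp P) x y) = pfaces (dualp (section_of P y x))"
  by (auto simp: section_of_def)
lemma sec_dual_le: "pleq (section_of (dualp P) x y) = pleq (dualp (section_of P y x))"
  by (auto simp: section_of_def dualp_def)

lemma facets_dual:
  assumes pol: "is_polytope P 4" and vf: "vertex_figures_iso P hemioctahedron"
  shows "facets_iso (dualp P) 4 hemicube"
  unfolding facets_iso_def
proof (intro allI impI)
  fix x y assume h: "is_least (dualp P) x \<and> y \<in> pfaces (dualp P) \<and> face_rank (dualp P) y = int 4 - 1"
  have gp: "gp P 4" using pol_gp[OF pol] .
  have yf: "y \<in> pfaces P" using h by simp
  have "face_rank P y = 0" using h rank_dual[OF gp yf] by simp
  moreover have "is_greatest P x" using h by simp
  ultimately have "poset_iso (section_of P y x) hemioctahedron" using vf yf unfolding vertex_figures_iso_def by blast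
  then have "poset_iso (dualp (section_of P y x)) (dualp hemioctahedron)" by (rule iso_dual)
  moreover have "poset_iso (dualp (section_of P y x)) (dualp hemioctahedron) = poset_iso (section_of (dualp P) x y) hemicube"
    apply (rule iso_cong)
       apply (simp only: sec_dual_faces)
      apply (simp only: sec_dual_le)
     apply (simp add: hemioctahedron_def)
    apply (rule ext, rule ext, simp add: hemioctahedron_def)
    done
  ultimately show "poset_iso (section_of (dualp P) x y) hemicube" by simp
qed

lemma vf_dual:
  assumes pol: "is_polytope P 4" and fc: "facets_iso P 4 hemicube"
  shows "vertex_figures_iso (dualp P) hemioctahedron"
  unfolding vertex_figures_iso_def
proof (intro allI impI)
  fix x y assume h: "x \<in> pfaces (dualp P) \<and> face_rank (dualp P) x = 0 \<and> is_greatest (dualp P) y"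
  have gp: "gp P 4" using pol_gp[OF pol] .
  have xf: "x \<in> pfaces P" using h by simp
  have "face_rank P x = int 4 - 1" using h rank_dual[OF gp xf] by simp
  moreover have "is_least P y" using h by simp
  ultimately have "poset_iso (section_of P y x) hemicube" using fc xf unfolding facets_iso_def by blast
  then have "poset_iso (dualp (section_of P y x)) (dualp hemicube)" by (rule iso_dual)
  moreover have "poset_iso (dualp (section_of P y x)) (dualp hemicube) = poset_iso (section_of (dualp P) x y) hemioctahedron"
    apply (rule iso_cong)
       apply (simp only: sec_dual_faces)
      apply (simp only: sec_dual_le)
     apply (simp add: hemioctahedron_def)
    apply (rule ext, rule ext, simp add: hemioctahedron_def)
    done
  ultimately show "poset_iso (section_of (dualp P) x y) hemioctahedron" by simp
qed

lemma cov_dual: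
  assumes gpP: "gp P 4" and gpR: "gp R 4" and cov: "is_covering P R g"
  shows "is_covering (dualp P) (dualp R) g"
proof -
  have img: "g ` pfaces P = pfaces R" using cov by (simp add: is_covering_def)
  have r: "\<forall>x\<in>pfaces P. face_rank R (g x) = face_rank P x" using cov by (simp add: is_covering_def)
  have rd: "\<forall>x\<in>pfaces (dualp P). face_rank (dualp R) (g x) = face_rank (dualp P) x"
  proof
    fix x assume "x \<in> pfaces (dualp P)"
    then have x: "x \<in> pfaces P" by simp
    then have "g x \<in> pfaces R" using img by blast
    then show "face_rank (dualp R) (g x) = face_rank (dualp P) x"
      using rank_dual[OF gpR] rank_dual[OF gpP x] r x by simp
  qed
  show ?thesis using cov rd unfolding is_covering_def by simp
qed

lemma inj_main:
  assumes good: "good P" and gd: "good (dualp P)" and polR: "is_polytope R 4"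
    and cov: "is_covering P R g" and covd: "is_covering (dualp P) (dualp R) g"
    and x: "x \<in> pfaces P" and y: "y \<in> pfaces P" and eq: "g x = g y"
  shows "x = y"
proof -
  have polP: "is_polytope P 4" using good by (simp add: good_def)
  have gp: "gp P 4" using pol_gp[OF polP] .
  have polRd: "is_polytope (dualp R) 4" using pol_dual[OF polR] .
  obtain bot where bot: "is_least P bot" using polP by (auto simp: is_polytope_def)
  obtain top where top: "is_greatest P top" using polP by (auto simp: is_polytope_def)
  have botd: "is_least (dualp P) top" using top by simp
  have topd: "is_greatest (dualp P) bot" using bot by simp
  have r: "face_rank P x = face_rank P y"
    using cov x y eq unfolding is_covering_def by metis
  have rr: "-1 \<le> face_rank P x \<and> face_rank P x \<le> 4" using rank_range[OF gp x] by simp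
  have rdx: "face_rank (dualp P) x = 3 - face_rank P x" using rank_dual[OF gp x] by simp
  have rdy: "face_rank (dualp P) y = 3 - face_rank P y" using rank_dual[OF gp y] by simp
  consider "face_rank P x = -1" | "face_rank P x = 0" | "face_rank P x = 1" | "face_rank P x = 2"
    | "face_rank P x = 3" | "face_rank P x = 4" using rr by linarith
  then show ?thesis
  proof cases
    case 1 then show ?thesis using rank_m1_least[OF gp bot] x y r by metis
  next
    case 2 then show ?thesis using vertex_inj[OF good polR cov bot top x _ y] r eq by simp
  next
    case 3 then show ?thesis using edge_inj[OF good polR cov bot top x _ y] r eq by simp
  next
    case 4 then show ?thesis using edge_inj[OF gd polRd covd botd topd, of x y] x y rdx rdy r eq by simp
  next
    case 5 then show ?thesis using vertex_inj[OF gd polRd covd botd topd, of x y] x y rdx rdy r eq by simp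
  next
    case 6 then show ?thesis using rank_top[OF gp top] x y r by (metis of_nat_numeral)
  qed
qed

theorem corollary3p2:
  fixes Q :: "'a face_poset" and R :: "'b face_poset" and g :: "'a \<Rightarrow> 'b"
  assumes "is_universal_KL Q hemicube hemioctahedron"
    and "is_polytope R 4"
    and "is_covering Q R g"
  shows "poset_iso Q R"
proof -
  have polQ: "is_polytope Q 4" using assms(1) unfolding is_universal_KL_def by (elim conjE)
  have fQ: "facets_iso Q 4 hemicube" using assms(1) unfolding is_universal_KL_def by (elim conjE)
  have vQ: "vertex_figures_iso Q hemioctahedron" using assms(1) unfolding is_universal_KL_def by (elim conjE)
  have polR: "is_polytope R 4" by (rule assms(2))
  have cov: "is_covering Q R g" by (rule assms(3))
  have gQ: "good Q" using good_from[OF polQ fQ vQ] .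
  have gQd: "good (dualp Q)" using good_from[OF pol_dual[OF polQ] facets_dual[OF polQ vQ] vf_dual[OF polQ fQ]] .
  have gpQ: "gp Q 4" using pol_gp[OF polQ] .
  have gpR: "gp R 4" using pol_gp[OF polR] .
  have covd: "is_covering (dualp Q) (dualp R) g" using cov_dual[OF gpQ gpR cov] .
  have inj: "inj_on g (pfaces Q)"
  proof (rule inj_onI)
    fix x y assume "x \<in> pfaces Q" "y \<in> pfaces Q" "g x = g y"
    then show "x = y" using inj_main[OF gQ gQd polR cov covd] by blast
  qed
  have bij: "bij_betw g (pfaces Q) (pfaces R)"
    unfolding bij_betw_def using inj cov_img[OF cov] by blast
  have ord: "pleq Q x y \<longleftrightarrow> pleq R (g x) (g y)" if x: "x \<in> pfaces Q" and y: "y \<in> pfaces Q" for x y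
  proof
    assume "pleq Q x y" then show "pleq R (g x) (g y)" using cov_le[OF cov x y] by simp
  next
    assume le: "pleq R (g x) (g y)"
    have gx: "g x \<in> pfaces R" and gy: "g y \<in> pfaces R" using cov_in[OF cov] x y by auto
    have "is_chain R {g x, g y}" using gx gy le gp_refl[OF gpR] by (auto simp: is_chain_def)
    then obtain \<Psi> where \<Psi>: "is_flag R \<Psi>" "{g x, g y} \<subseteq> \<Psi>" using chain_extend by blast
    obtain \<Phi> where \<Phi>: "is_flag Q \<Phi>" "g ` \<Phi> = \<Psi>" using cov_lift[OF cov \<Psi>(1)] by blast
    obtain x' where x': "x' \<in> \<Phi>" "g x' = g x" using \<Psi>(2) \<Phi>(2) by (metis imageE insert_subset)
    obtain y' where y': "y' \<in> \<Phi>" "g y' = g y" using \<Psi>(2) \<Phi>(2) by (metis imageE insert_subset)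
    have "x' = x" using inj_onD[OF inj x'(2)] x' x flag_sub[OF \<Phi>(1)] by blast
    moreover have "y' = y" using inj_onD[OF inj y'(2)] y' y flag_sub[OF \<Phi>(1)] by blast
    ultimately have xy: "x \<in> \<Phi>" "y \<in> \<Phi>" using x' y' by auto
    show "pleq Q x y"
    proof (cases "pleq Q x y")
      case True then show ?thesis .
    next
      case False
      then have "pleq Q y x" using flag_cmp[OF \<Phi>(1) xy] by blast
      then have "pleq R (g y) (g x)" using cov_le[OF cov y x] by simp
      then have "g x = g y" using gp_antisym[OF gpR gx gy le] by simp
      then have "x = y" using inj_onD[OF inj] x y by blast
      then show ?thesis using gp_refl[OF gpQ x] by simp
    qed
  qed
  show ?thesis unfolding poset_iso_def using bij ord by blast
qed

end
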